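(* Let $f\in GM$ be real-valued and let $\nu\in\mathbb{R}\setminus\{0\}$. Suppose $t^\nu f(t)\to 0$ as $t\to 0^+$. Then the improper integral $\int_0^\infty t^{\nu-1}f(t)\,dt$ converges if and only if both $t^\nu f(t)\to 0$ as $t\to\infty$ and the improper Stieltjes integral $\int_0^\infty t^\nu\,df(t)$ converges. Moreover, in that case $$\int_0^\infty t^{\nu-1}f(t)\,dt=-\frac{1}{\nu}\int_0^\infty t^\nu\,df(t).$$
   Context: $\mathbb{R}_+=[0,\infty)$. All functions $f:\mathbb{R}_+\to\mathbb{C}$ considered are locally integrable, locally of bounded variation on $(0,\infty)$, and satisfy $f(t)\to 0$ as $t\to\infty$. Integrals over infinite intervals (and integrals $\int_0^\infty$) are understood as improper Riemann (Riemann–Stieltjes) integrals. Such an $f$ is called general monotone, written $f\in GM$, if there exist constants $C>1$ and $\lambda>1$ such that for every $x>0$, $$\int_x^{2x}|df(t)|\le C\int_{x/\lambda}^{\lambda x}\frac{|f(t)|}{t}\,dt,$$ where $|df|$ denotes the total variation measure of $f$. *)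

theory Defs
  imports "HOL-Analysis.Analysis"
begin

definition tagged_partition :: "real \<Rightarrow> real \<Rightarrow> nat \<Rightarrow> (nat \<Rightarrow> real) \<Rightarrow> (nat \<Rightarrow> real) \<Rightarrow> bool" where
  "tagged_partition a b n x xi \<longleftrightarrow>
     x 0 = a \<and> x n = b \<and> (\<forall>i<n. x i < x (Suc i) \<and> x i \<le> xi i \<and> xi i \<le> x (Suc i))"

definition partition :: "real \<Rightarrow> real \<Rightarrow> nat \<Rightarrow> (nat \<Rightarrow> real) \<Rightarrow> bool" where
  "partition a b n x \<longleftrightarrow> x 0 = a \<and> x n = b \<and> (\<forall>i<n. x i < x (Suc i))"

definition var_sums :: "(real \<Rightarrow> real) \<Rightarrow> real \<Rightarrow> real \<Rightarrow> real set" where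
  "var_sums f a b = {(\<Sum>i<n. \<bar>f (x (Suc i)) - f (x i)\<bar>) | n x. partition a b n x}"

definition bounded_variation_on :: "(real \<Rightarrow> real) \<Rightarrow> real \<Rightarrow> real \<Rightarrow> bool" where
  "bounded_variation_on f a b \<longleftrightarrow> bdd_above (var_sums f a b)"

definition total_variation :: "(real \<Rightarrow> real) \<Rightarrow> real \<Rightarrow> real \<Rightarrow> real" where
  "total_variation f a b = Sup (var_sums f a b)"

definition has_RS_integral :: "(real \<Rightarrow> real) \<Rightarrow> (real \<Rightarrow> real) \<Rightarrow> real \<Rightarrow> real \<Rightarrow> real \<Rightarrow> bool" where
  "has_RS_integral g f a b I \<longleftrightarrow>
     (\<forall>e>0. \<exists>d>0. \<forall>n x xi. tagged_partition a b n x xi \<and> (\<forall>i<n. x (Suc i) - x i < d) \<longrightarrow>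
        \<bar>(\<Sum>i<n. g (xi i) * (f (x (Suc i)) - f (x i))) - I\<bar> < e)"

definition RS_integral :: "(real \<Rightarrow> real) \<Rightarrow> (real \<Rightarrow> real) \<Rightarrow> real \<Rightarrow> real \<Rightarrow> real" where
  "RS_integral g f a b = (THE I. has_RS_integral g f a b I)"

definition improper_integral_0_inf :: "(real \<Rightarrow> real) \<Rightarrow> real \<Rightarrow> bool" where
  "improper_integral_0_inf g L \<longleftrightarrow>
     (\<forall>a b. 0 < a \<longrightarrow> a \<le> b \<longrightarrow> g integrable_on {a..b}) \<and>
     ((\<lambda>(a, b). integral {a..b} g) \<longlongrightarrow> L) (at_right 0 \<times>\<^sub>F at_top)"

definition improper_RS_integral_0_inf :: "(real \<Rightarrow> real) \<Rightarrow> (real \<Rightarrow> real) \<Rightarrow> real \<Rightarrow> bool" where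
  "improper_RS_integral_0_inf g f L \<longleftrightarrow>
     (\<forall>a b. 0 < a \<longrightarrow> a \<le> b \<longrightarrow> (\<exists>I. has_RS_integral g f a b I)) \<and>
     ((\<lambda>(a, b). RS_integral g f a b) \<longlongrightarrow> L) (at_right 0 \<times>\<^sub>F at_top)"

definition admissible :: "(real \<Rightarrow> real) \<Rightarrow> bool" where
  "admissible f \<longleftrightarrow>
     (\<forall>b\<ge>0. f absolutely_integrable_on {0..b}) \<and>
     (\<forall>a b. 0 < a \<longrightarrow> a \<le> b \<longrightarrow> bounded_variation_on f a b) \<and>
     (f \<longlongrightarrow> 0) at_top"

definition GM :: "(real \<Rightarrow> real) \<Rightarrow> bool" where
  "GM f \<longleftrightarrow> admissible f \<and>
     (\<exists>C lam. C > 1 \<and> lam > 1 \<and>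
        (\<forall>x>0. total_variation f x (2 * x) \<le> C * integral {x / lam..lam * x} (\<lambda>t. \<bar>f t\<bar> / t)))"

end

theory Submission
  imports Defs
begin


lemma sum_lessThan_add_split:
  "(\<Sum>i<n+m. g i) = (\<Sum>i<n. g i) + (\<Sum>i<m. g (n+i)) " for g :: "nat \<Rightarrow> real"
  by (induction m) auto

lemma var_sums_nonneg: "s \<in> var_sums f a b \<Longrightarrow> 0 \<le> s"
  unfolding var_sums_def by (auto intro!: sum_nonneg)

lemma abs_diff_in_var_sums:
  assumes "a < b" shows "\<bar>f b - f a\<bar> \<in> var_sums f a b"
proof -
  have "partition a b 1 (\<lambda>i. if i = 0 then a else b)"
    using assms by (auto simp: partition_def)
  then show ?thesis unfolding var_sums_def
    by (auto intro!: exI[of _ 1] exI[of _ "\<lambda>i. if i = 0 then a else b"])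
qed

lemma var_sums_nonempty:
  assumes "a \<le> b" shows "var_sums f a b \<noteq> {}"
proof (cases "a < b")
  case True then show ?thesis using abs_diff_in_var_sums by blast
next
  case False
  then have "a = b" using assms by auto
  then have "partition a b 0 (\<lambda>i. a)" by (auto simp: partition_def)
  then show ?thesis unfolding var_sums_def by blast
qed

lemma partition_concat:
  fixes f :: "real \<Rightarrow> real"
  assumes x: "partition a c n x" and y: "partition c b m y"
  shows "partition a b (n+m) (\<lambda>i. if i \<le> n then x i else y (i - n))
     \<and> (\<Sum>i<n+m. \<bar>f ((\<lambda>i. if i \<le> n then x i else y (i - n)) (Suc i)) - f ((\<lambda>i. if i \<le> n then x i else y (i - n)) i)\<bar>)
       = (\<Sum>i<n. \<bar>f (x (Suc i)) - f (x i)\<bar>) + (\<Sum>i<m. \<bar>f (y (Suc i)) - f (y i)\<bar>)"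
proof -
  define z where "z = (\<lambda>i. if i \<le> n then x i else y (i - n))"
  have x0: "x 0 = a" "x n = c" "\<And>i. i < n \<Longrightarrow> x i < x (Suc i)" using x by (auto simp: partition_def)
  have y0: "y 0 = c" "y m = b" "\<And>i. i < m \<Longrightarrow> y i < y (Suc i)" using y by (auto simp: partition_def)
  have p: "partition a b (n+m) z"
    unfolding partition_def
  proof (intro conjI allI impI)
    show "z 0 = a" using x0 by (simp add: z_def)
    show "z (n+m) = b" using x0 y0 by (cases "m = 0") (auto simp: z_def)
    fix i assume i: "i < n + m"
    show "z i < z (Suc i)"
    proof (cases "i < n")
      case True then show ?thesis using x0 by (simp add: z_def)
    next
      case False
      then have "i - n < m" "Suc i - n = Suc (i - n)" using i by auto
      then show ?thesis using y0 x0 False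
        by (cases "i = n") (auto simp: z_def)
    qed
  qed
  have "(\<Sum>i<n+m. \<bar>f (z (Suc i)) - f (z i)\<bar>)
       = (\<Sum>i<n. \<bar>f (z (Suc i)) - f (z i)\<bar>) + (\<Sum>i<m. \<bar>f (z (Suc (n+i))) - f (z (n+i))\<bar>)"
    using sum_lessThan_add_split[of "\<lambda>i. \<bar>f (z (Suc i)) - f (z i)\<bar>"] by simp
  also have "(\<Sum>i<n. \<bar>f (z (Suc i)) - f (z i)\<bar>) = (\<Sum>i<n. \<bar>f (x (Suc i)) - f (x i)\<bar>)"
    by (rule sum.cong) (auto simp: z_def)
  also have "(\<Sum>i<m. \<bar>f (z (Suc (n+i))) - f (z (n+i))\<bar>) = (\<Sum>i<m. \<bar>f (y (Suc i)) - f (y i)\<bar>)"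
    by (rule sum.cong) (use x0 y0 in \<open>auto simp: z_def\<close>)
  finally show ?thesis using p unfolding z_def by simp
qed

lemma var_sums_add:
  assumes "s1 \<in> var_sums f a c" "s2 \<in> var_sums f c b"
  shows "s1 + s2 \<in> var_sums f a b"
proof -
  obtain n x where x: "partition a c n x" "s1 = (\<Sum>i<n. \<bar>f (x (Suc i)) - f (x i)\<bar>)"
    using assms(1) unfolding var_sums_def by blast
  obtain m y where y: "partition c b m y" "s2 = (\<Sum>i<m. \<bar>f (y (Suc i)) - f (y i)\<bar>)"
    using assms(2) unfolding var_sums_def by blast
  from partition_concat[OF x(1) y(1), of f] x y show ?thesis
    unfolding var_sums_def by (intro CollectI exI conjI) (auto)
qed

lemma partition_le: "partition a b n x \<Longrightarrow> a \<le> b"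
proof -
  assume p: "partition a b n x"
  have "\<forall>i\<le>n. x 0 \<le> x i"
  proof (intro allI impI)
    fix i show "i \<le> n \<Longrightarrow> x 0 \<le> x i"
    proof (induction i)
      case (Suc i)
      then have "x 0 \<le> x i" "x i < x (Suc i)" using p unfolding partition_def by auto
      then show ?case by linarith
    qed simp
  qed
  then show ?thesis using p unfolding partition_def by auto
qed

lemma BV_split:
  assumes bv: "bounded_variation_on f a b" and ac: "a \<le> c" and cb: "c \<le> b"
  shows "bounded_variation_on f a c" "bounded_variation_on f c b"
    "total_variation f a c + total_variation f c b \<le> total_variation f a b"
proof -
  let ?A = "var_sums f a c" and ?B = "var_sums f c b" and ?V = "total_variation f a b"
  have ne: "?A \<noteq> {}" "?B \<noteq> {}" using var_sums_nonempty ac cb by auto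
  have ub: "s1 + s2 \<le> ?V" if "s1 \<in> ?A" "s2 \<in> ?B" for s1 s2
    using bv var_sums_add[OF that] unfolding bounded_variation_on_def total_variation_def
    by (simp add: cSup_upper)
  have bA: "bdd_above ?A"
  proof -
    obtain s2 where "s2 \<in> ?B" using ne by auto
    then show ?thesis using ub var_sums_nonneg[of s2]
      by (intro bdd_aboveI[of _ ?V]) force
  qed
  have bB: "bdd_above ?B"
  proof -
    obtain s1 where "s1 \<in> ?A" using ne by auto
    then show ?thesis using ub var_sums_nonneg[of s1]
      by (intro bdd_aboveI[of _ ?V]) force
  qed
  show "bounded_variation_on f a c" "bounded_variation_on f c b"
    using bA bB by (auto simp: bounded_variation_on_def)
  have "Sup ?A \<le> ?V - s2" if "s2 \<in> ?B" for s2
    using ne ub that by (intro cSup_least) force+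
  then have "s2 \<le> ?V - Sup ?A" if "s2 \<in> ?B" for s2 using that by force
  then have "Sup ?B \<le> ?V - Sup ?A" using ne by (intro cSup_least) auto
  then show "total_variation f a c + total_variation f c b \<le> ?V"
    unfolding total_variation_def by simp
qed

lemma TV_nonneg:
  assumes "bounded_variation_on f a b" "a \<le> b" shows "0 \<le> total_variation f a b"
proof -
  obtain s where "s \<in> var_sums f a b" using var_sums_nonempty assms by blast
  then show ?thesis using assms var_sums_nonneg[of s]
    unfolding bounded_variation_on_def total_variation_def
    by (meson cSup_upper order_trans)
qed

lemma TV_ge_diff:
  assumes "bounded_variation_on f a b" "a \<le> b" shows "\<bar>f b - f a\<bar> \<le> total_variation f a b"
proof (cases "a < b")
  case True then show ?thesis using assms abs_diff_in_var_sums[OF True, of f]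
    unfolding bounded_variation_on_def total_variation_def by (simp add: cSup_upper)
next
  case False then show ?thesis using TV_nonneg[OF assms] assms by auto
qed

lemma TV_mono:
  assumes bv: "bounded_variation_on f a b" and "a \<le> c" "c \<le> d" "d \<le> b"
  shows "bounded_variation_on f c d" "total_variation f c d \<le> total_variation f a b"
proof -
  have 1: "bounded_variation_on f c b" "total_variation f a c + total_variation f c b \<le> total_variation f a b"
    using BV_split[OF bv, of c] assms by auto
  have 2: "bounded_variation_on f c d" "bounded_variation_on f d b"
    "total_variation f c d + total_variation f d b \<le> total_variation f c b"
    using BV_split[OF 1(1), of d] assms by auto
  show "bounded_variation_on f c d" using 2 by simp
  have "0 \<le> total_variation f a c" using BV_split(1)[OF bv, of c] assms TV_nonneg by auto
  moreover have "0 \<le> total_variation f d b" using 2 assms TV_nonneg by auto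
  ultimately show "total_variation f c d \<le> total_variation f a b" using 1 2 by linarith
qed

lemma TV_ge_diff2:
  assumes bv: "bounded_variation_on f a b" and "a \<le> x" "x \<le> b" "a \<le> y" "y \<le> b"
  shows "\<bar>f y - f x\<bar> \<le> total_variation f a b"
proof (cases "x \<le> y")
  case True then show ?thesis using TV_mono[OF bv, of x y] TV_ge_diff[of f x y] assms by force
next
  case False then show ?thesis using TV_mono[OF bv, of y x] TV_ge_diff[of f y x] assms by force
qed

lemma TV_sum_pieces:
  assumes mono: "\<And>i. i < N \<Longrightarrow> p i \<le> p (Suc i)" and bv: "bounded_variation_on f (p 0) (p N)"
  shows "(\<Sum>i<N. total_variation f (p i) (p (Suc i))) \<le> total_variation f (p 0) (p N)"
  using mono bv
proof (induction N)
  case 0 then show ?case using TV_nonneg by auto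
next
  case (Suc N)
  note mm = Suc.prems(1)
  have le: "p 0 \<le> p N"
  proof -
    have "\<forall>i\<le>N. p 0 \<le> p i"
    proof (intro allI impI)
      fix i show "i \<le> N \<Longrightarrow> p 0 \<le> p i"
      proof (induction i)
        case (Suc i)
        then have "p 0 \<le> p i" "p i \<le> p (Suc i)" using mm by auto
        then show ?case by linarith
      qed simp
    qed
    then show ?thesis by auto
  qed
  have s: "bounded_variation_on f (p 0) (p N)"
    "total_variation f (p 0) (p N) + total_variation f (p N) (p (Suc N)) \<le> total_variation f (p 0) (p (Suc N))"
    using BV_split[OF Suc.prems(2) le] Suc.prems(1) by auto
  have "(\<Sum>i<N. total_variation f (p i) (p (Suc i))) \<le> total_variation f (p 0) (p N)"
    using Suc.IH Suc.prems s by auto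
  then show ?case using s by simp
qed



lemma integ_mult:
  fixes f h :: "real \<Rightarrow> real"
  assumes "f absolutely_integrable_on {u..w}" "continuous_on {u..w} h"
  shows "(\<lambda>t. f t * h t) absolutely_integrable_on {u..w}"
proof -
  have "(\<lambda>t. h t * f t) absolutely_integrable_on {u..w}"
    apply (rule absolutely_integrable_bounded_measurable_product_real)
    using assms
    by (auto intro!: continuous_imp_measurable_on_sets_lebesgue compact_imp_bounded compact_continuous_image)
  then show ?thesis by (simp add: mult.commute)
qed

lemma mono_idx:
  assumes "\<And>i. i < n \<Longrightarrow> x i \<le> (x (Suc i) :: real)" "i \<le> j" "j \<le> n"
  shows "x i \<le> x j"
  using assms(2,3)
proof (induction j)
  case 0 then show ?case by simp
next
  case (Suc j)
  show ?case
  proof (cases "i = Suc j")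
    case True then show ?thesis by simp
  next
    case False
    then have "x i \<le> x j" using Suc by auto
    moreover have "x j \<le> x (Suc j)" using assms(1) Suc.prems by auto
    ultimately show ?thesis by linarith
  qed
qed

lemma integral_partition_sum:
  fixes h :: "real \<Rightarrow> real"
  assumes mono: "\<And>i. i < n \<Longrightarrow> x i \<le> x (Suc i)" and int: "h integrable_on {x 0..x n}"
  shows "integral {x 0..x n} h = (\<Sum>i<n. integral {x i..x (Suc i)} h)"
  using mono int
proof (induction n)
  case 0 then show ?case by simp
next
  case (Suc n)
  note mm = Suc.prems(1)
  have le: "x 0 \<le> x n" using mono_idx[of "Suc n" x 0 n] mm by auto
  have le2: "x n \<le> x (Suc n)" using mm by auto
  have i1: "h integrable_on {x 0..x n}"
    using integrable_subinterval_real[OF Suc.prems(2)] le le2 by auto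
  have "integral {x 0..x (Suc n)} h = integral {x 0..x n} h + integral {x n..x (Suc n)} h"
    using Henstock_Kurzweil_Integration.integral_combine[OF le le2 Suc.prems(2)] by simp
  then show ?case using Suc.IH[OF _ i1] mm by simp
qed

lemma by_parts_piece:
  fixes f g g' :: "real \<Rightarrow> real"
  assumes uxi: "u \<le> \<xi>" "\<xi> \<le> w"
    and fi: "f absolutely_integrable_on {u..w}"
    and bv: "bounded_variation_on f u w"
    and gd: "\<And>t. t \<in> {u..w} \<Longrightarrow> (g has_real_derivative g' t) (at t)"
    and gc: "continuous_on {u..w} g'"
    and K: "\<And>t. t \<in> {u..w} \<Longrightarrow> \<bar>g' t\<bar> \<le> K"
  shows "\<bar>g \<xi> * (f w - f u) - (g w * f w - g u * f u) + integral {u..w} (\<lambda>t. f t * g' t)\<bar>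
          \<le> (w - u) * K * total_variation f u w"
proof -
  let ?V = "total_variation f u w"
  have uw: "u \<le> w" using uxi by linarith
  have fg: "(\<lambda>t. f t * g' t) integrable_on {u..w}"
    using integ_mult[OF fi gc] set_lebesgue_integral_eq_integral(1) by blast
  have g'i: "g' integrable_on {u..w}" using gc integrable_continuous_real by blast
  have fg1: "(\<lambda>t. f t * g' t) integrable_on {u..\<xi>}" and fg2: "(\<lambda>t. f t * g' t) integrable_on {\<xi>..w}"
    using integrable_subinterval_real[OF fg] uxi by auto
  have g'1: "g' integrable_on {u..\<xi>}" and g'2: "g' integrable_on {\<xi>..w}"
    using integrable_subinterval_real[OF g'i] uxi by auto
  have ftc1: "(g' has_integral (g \<xi> - g u)) {u..\<xi>}"
  proof (rule fundamental_theorem_of_calculus[OF uxi(1)])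
    fix t assume "t \<in> {u..\<xi>}"
    then have "t \<in> {u..w}" using uxi by auto
    from gd[OF this] show "(g has_vector_derivative g' t) (at t within {u..\<xi>})"
      unfolding has_real_derivative_iff_has_vector_derivative by (rule has_vector_derivative_at_within)
  qed
  have ftc2: "(g' has_integral (g w - g \<xi>)) {\<xi>..w}"
  proof (rule fundamental_theorem_of_calculus[OF uxi(2)])
    fix t assume "t \<in> {\<xi>..w}"
    then have "t \<in> {u..w}" using uxi by auto
    from gd[OF this] show "(g has_vector_derivative g' t) (at t within {\<xi>..w})"
      unfolding has_real_derivative_iff_has_vector_derivative by (rule has_vector_derivative_at_within)
  qed
  have split: "integral {u..w} (\<lambda>t. f t * g' t) = integral {u..\<xi>} (\<lambda>t. f t * g' t) + integral {\<xi>..w} (\<lambda>t. f t * g' t)"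
    using Henstock_Kurzweil_Integration.integral_combine[OF uxi fg] by simp
  define h1 where "h1 = (\<lambda>t. (f t - f u) * g' t)"
  define h2 where "h2 = (\<lambda>t. (f t - f w) * g' t)"
  have h1i: "(h1 has_integral (integral {u..\<xi>} (\<lambda>t. f t * g' t) - f u * (g \<xi> - g u))) {u..\<xi>}"
    unfolding h1_def left_diff_distrib
    by (intro has_integral_diff integrable_integral fg1 has_integral_mult_right ftc1)
  have h2i: "(h2 has_integral (integral {\<xi>..w} (\<lambda>t. f t * g' t) - f w * (g w - g \<xi>))) {\<xi>..w}"
    unfolding h2_def left_diff_distrib
    by (intro has_integral_diff integrable_integral fg2 has_integral_mult_right ftc2)
  have eq: "g \<xi> * (f w - f u) - (g w * f w - g u * f u) + integral {u..w} (\<lambda>t. f t * g' t)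
      = integral {u..\<xi>} h1 + integral {\<xi>..w} h2"
    using integral_unique[OF h1i] integral_unique[OF h2i] split by (simp add: algebra_simps)
  have V0: "0 \<le> ?V" using TV_nonneg[OF bv uw] .
  have K0: "0 \<le> K" using K[of u] uw by force
  have b1: "\<bar>integral {u..\<xi>} h1\<bar> \<le> integral {u..\<xi>} (\<lambda>t. ?V * K)"
  proof -
    have "norm (integral {u..\<xi>} h1) \<le> integral {u..\<xi>} (\<lambda>t. ?V * K)"
    proof (rule integral_norm_bound_integral)
      show "h1 integrable_on {u..\<xi>}" using h1i by blast
      show "(\<lambda>t. ?V * K) integrable_on {u..\<xi>}" by (rule Henstock_Kurzweil_Integration.integrable_const_ivl)
      fix t assume t: "t \<in> {u..\<xi>}"
      have "\<bar>f t - f u\<bar> \<le> ?V" using TV_ge_diff2[OF bv, of u t] t uxi by auto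
      moreover have "\<bar>g' t\<bar> \<le> K" using K t uxi by auto
      ultimately show "norm (h1 t) \<le> ?V * K" unfolding h1_def
        by (simp add: abs_mult mult_mono V0 K0)
    qed
    then show ?thesis by simp
  qed
  have b2: "\<bar>integral {\<xi>..w} h2\<bar> \<le> integral {\<xi>..w} (\<lambda>t. ?V * K)"
  proof -
    have "norm (integral {\<xi>..w} h2) \<le> integral {\<xi>..w} (\<lambda>t. ?V * K)"
    proof (rule integral_norm_bound_integral)
      show "h2 integrable_on {\<xi>..w}" using h2i by blast
      show "(\<lambda>t. ?V * K) integrable_on {\<xi>..w}" by (rule Henstock_Kurzweil_Integration.integrable_const_ivl)
      fix t assume t: "t \<in> {\<xi>..w}"
      have "\<bar>f t - f w\<bar> \<le> ?V" using TV_ge_diff2[OF bv, of t w] t uxi by auto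
      moreover have "\<bar>g' t\<bar> \<le> K" using K t uxi by auto
      ultimately show "norm (h2 t) \<le> ?V * K" unfolding h2_def
        by (simp add: abs_mult mult_mono V0 K0)
    qed
    then show ?thesis by simp
  qed
  have "\<bar>integral {u..\<xi>} h1 + integral {\<xi>..w} h2\<bar> \<le> (\<xi> - u) * (?V * K) + (w - \<xi>) * (?V * K)"
  proof -
    have t: "\<bar>integral {u..\<xi>} h1 + integral {\<xi>..w} h2\<bar> \<le> \<bar>integral {u..\<xi>} h1\<bar> + \<bar>integral {\<xi>..w} h2\<bar>"
      by (rule abs_triangle_ineq)
    have c1: "integral {u..\<xi>} (\<lambda>t. ?V * K) = (\<xi> - u) * (?V * K)" using uxi by simp
    have c2: "integral {\<xi>..w} (\<lambda>t. ?V * K) = (w - \<xi>) * (?V * K)" using uxi by simp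
    show ?thesis using t b1 b2 unfolding c1 c2 by linarith
  qed
  also have "\<dots> = (w - u) * K * ?V" by (simp add: algebra_simps)
  finally show ?thesis using eq by simp
qed

lemma tagged_partition_in:
  assumes "tagged_partition a b n x xi" "i \<le> n"
  shows "a \<le> x i" "x i \<le> b"
proof -
  have m: "\<And>i. i < n \<Longrightarrow> x i \<le> x (Suc i)" using assms(1) unfolding tagged_partition_def by force
  show "a \<le> x i" using mono_idx[of n x 0 i] m assms unfolding tagged_partition_def by auto
  show "x i \<le> b" using mono_idx[of n x i n] m assms unfolding tagged_partition_def by auto
qed

lemma RS_by_parts:
  fixes f g g' :: "real \<Rightarrow> real"
  assumes ab: "a \<le> b"
    and fi: "f absolutely_integrable_on {a..b}"
    and bv: "bounded_variation_on f a b"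
    and gd: "\<And>t. t \<in> {a..b} \<Longrightarrow> (g has_real_derivative g' t) (at t)"
    and gc: "continuous_on {a..b} g'"
  shows "has_RS_integral g f a b (g b * f b - g a * f a - integral {a..b} (\<lambda>t. f t * g' t))"
proof -
  obtain K where K0: "K > 0" and K: "\<And>t. t \<in> {a..b} \<Longrightarrow> \<bar>g' t\<bar> \<le> K"
    using compact_imp_bounded[OF compact_continuous_image[OF gc compact_Icc]]
    unfolding bounded_pos by force
  define V where "V = total_variation f a b"
  have V0: "0 \<le> V" unfolding V_def using TV_nonneg[OF bv ab] .
  have fgi: "(\<lambda>t. f t * g' t) integrable_on {a..b}"
    using integ_mult[OF fi gc] set_lebesgue_integral_eq_integral(1) by blast
  show ?thesis unfolding has_RS_integral_def
  proof (intro allI impI)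
    fix e :: real assume e: "e > 0"
    define d where "d = e / (K * (V + 1))"
    have d0: "d > 0" unfolding d_def using e K0 V0 by auto
    show "\<exists>d>0. \<forall>n x xi. tagged_partition a b n x xi \<and> (\<forall>i<n. x (Suc i) - x i < d) \<longrightarrow>
        \<bar>(\<Sum>i<n. g (xi i) * (f (x (Suc i)) - f (x i))) - (g b * f b - g a * f a - integral {a..b} (\<lambda>t. f t * g' t))\<bar> < e"
    proof (intro exI[of _ d] conjI d0 allI impI, elim conjE)
      fix n x xi assume tp: "tagged_partition a b n x xi" and mesh: "\<forall>i<n. x (Suc i) - x i < d"
      have x0: "x 0 = a" "x n = b" and inc: "\<And>i. i < n \<Longrightarrow> x i < x (Suc i)"
        and xi: "\<And>i. i < n \<Longrightarrow> x i \<le> xi i \<and> xi i \<le> x (Suc i)"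
        using tp unfolding tagged_partition_def by auto
      have inab: "\<And>i. i \<le> n \<Longrightarrow> a \<le> x i \<and> x i \<le> b" using tagged_partition_in[OF tp] by auto
      have incl: "\<And>i. i < n \<Longrightarrow> x i \<le> x (Suc i)" using inc less_imp_le by blast
      define T where "T i = g (xi i) * (f (x (Suc i)) - f (x i)) - (g (x (Suc i)) * f (x (Suc i)) - g (x i) * f (x i))
          + integral {x i..x (Suc i)} (\<lambda>t. f t * g' t)" for i
      have tele: "(\<Sum>i<n. g (x (Suc i)) * f (x (Suc i)) - g (x i) * f (x i)) = g b * f b - g a * f a"
        using sum_lessThan_telescope[of "\<lambda>i. g (x i) * f (x i)" n] x0 by simp
      have isum: "integral {a..b} (\<lambda>t. f t * g' t) = (\<Sum>i<n. integral {x i..x (Suc i)} (\<lambda>t. f t * g' t))"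
        using integral_partition_sum[of n x, OF incl] fgi x0 by auto
      have eqT: "(\<Sum>i<n. g (xi i) * (f (x (Suc i)) - f (x i))) - (g b * f b - g a * f a - integral {a..b} (\<lambda>t. f t * g' t))
          = (\<Sum>i<n. T i)"
        unfolding T_def sum.distrib sum_subtractf tele[symmetric] isum by simp
      have Tb: "\<bar>T i\<bar> \<le> d * K * total_variation f (x i) (x (Suc i))" if i: "i < n" for i
      proof -
        have sub: "a \<le> x i" "x (Suc i) \<le> b" "x i \<le> x (Suc i)" using inab[of i] inab[of "Suc i"] i incl by auto
        have bvi: "bounded_variation_on f (x i) (x (Suc i))" using TV_mono(1)[OF bv sub(1) sub(3) sub(2)] .
        have "\<bar>T i\<bar> \<le> (x (Suc i) - x i) * K * total_variation f (x i) (x (Suc i))"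
          unfolding T_def
        proof (rule by_parts_piece)
          show "x i \<le> xi i" "xi i \<le> x (Suc i)" using xi[OF i] by auto
          show "f absolutely_integrable_on {x i..x (Suc i)}"
            using absolutely_integrable_on_subinterval[OF fi] sub by auto
          show "bounded_variation_on f (x i) (x (Suc i))" by (rule bvi)
          show "\<And>t. t \<in> {x i..x (Suc i)} \<Longrightarrow> (g has_real_derivative g' t) (at t)"
            using gd sub by auto
          show "continuous_on {x i..x (Suc i)} g'" using continuous_on_subset[OF gc] sub by auto
          show "\<And>t. t \<in> {x i..x (Suc i)} \<Longrightarrow> \<bar>g' t\<bar> \<le> K" using K sub by auto
        qed
        also have "\<dots> \<le> d * K * total_variation f (x i) (x (Suc i))"
          using mesh i TV_nonneg[OF bvi sub(3)] K0
          by (intro mult_right_mono) auto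
        finally show ?thesis .
      qed
      have "\<bar>\<Sum>i<n. T i\<bar> \<le> (\<Sum>i<n. \<bar>T i\<bar>)" by (rule sum_abs)
      also have "\<dots> \<le> (\<Sum>i<n. d * K * total_variation f (x i) (x (Suc i)))"
        by (rule sum_mono) (use Tb in auto)
      also have "\<dots> = d * K * (\<Sum>i<n. total_variation f (x i) (x (Suc i)))"
        by (simp add: sum_distrib_left)
      also have "\<dots> \<le> d * K * V"
        using TV_sum_pieces[of n x f, OF incl] bv x0 d0 K0 unfolding V_def
        by (intro mult_left_mono) auto
      also have "\<dots> < e"
      proof -
        have V1: "V + 1 > 0" using V0 by auto
        have KV: "K + K * V > 0" using K0 V0 by (simp add: add_pos_nonneg)
        have "d * K = e / (V + 1)" unfolding d_def using K0 V1 KV by (simp add: field_simps)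
        then have "d * K * V = e * (V / (V + 1))" by simp
        also have "\<dots> < e * 1" using e V0 V1 by (intro mult_strict_left_mono) auto
        finally show ?thesis by simp
      qed
      finally show "\<bar>(\<Sum>i<n. g (xi i) * (f (x (Suc i)) - f (x i))) - (g b * f b - g a * f a - integral {a..b} (\<lambda>t. f t * g' t))\<bar> < e"
        using eqT by simp
    qed
  qed
qed

lemma exists_fine_partition:
  assumes ab: "a \<le> b" and d: "d > 0"
  shows "\<exists>n x xi. tagged_partition a b n x xi \<and> (\<forall>i<n. x (Suc i) - x i < d)"
proof (cases "a = b")
  case True
  then have "tagged_partition a b 0 (\<lambda>_. a) (\<lambda>_. a)" by (simp add: tagged_partition_def)
  then show ?thesis by blast
next
  case False
  then have ab': "a < b" using ab by auto
  define n :: nat where "n = nat (ceiling ((b - a) / d)) + 1"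
  have n0: "n > 0" unfolding n_def by simp
  have "(b - a) / d \<le> real (nat (ceiling ((b - a) / d)))" by linarith
  then have "(b - a) / d < real n" unfolding n_def by simp
  then have hn: "(b - a) / real n < d" using n0 d by (simp add: field_simps)
  define x where "x i = a + real i * (b - a) / real n" for i
  have "tagged_partition a b n x x"
    unfolding tagged_partition_def x_def using n0 ab' by (auto simp: field_simps)
  moreover have "\<forall>i<n. x (Suc i) - x i < d"
  proof (intro allI impI)
    fix i
    have "x (Suc i) - x i = (b - a) / real n" unfolding x_def using n0 by (simp add: field_simps)
    then show "x (Suc i) - x i < d" using hn by simp
  qed
  ultimately show ?thesis by blast
qed

lemma has_RS_unique:
  assumes "has_RS_integral g f a b I" "has_RS_integral g f a b J" "a \<le> b"
  shows "I = J"
proof (rule ccontr)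
  assume ne: "I \<noteq> J"
  define e where "e = \<bar>I - J\<bar> / 2"
  have e: "e > 0" using ne unfolding e_def by auto
  obtain d1 where d1: "d1 > 0" "\<forall>n x xi. tagged_partition a b n x xi \<and> (\<forall>i<n. x (Suc i) - x i < d1) \<longrightarrow>
        \<bar>(\<Sum>i<n. g (xi i) * (f (x (Suc i)) - f (x i))) - I\<bar> < e"
    using assms(1) e unfolding has_RS_integral_def by blast
  obtain d2 where d2: "d2 > 0" "\<forall>n x xi. tagged_partition a b n x xi \<and> (\<forall>i<n. x (Suc i) - x i < d2) \<longrightarrow>
        \<bar>(\<Sum>i<n. g (xi i) * (f (x (Suc i)) - f (x i))) - J\<bar> < e"
    using assms(2) e unfolding has_RS_integral_def by blast
  obtain n x xi where p: "tagged_partition a b n x xi" "\<forall>i<n. x (Suc i) - x i < min d1 d2"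
    using exists_fine_partition[OF assms(3), of "min d1 d2"] d1 d2 by auto
  have "\<bar>(\<Sum>i<n. g (xi i) * (f (x (Suc i)) - f (x i))) - I\<bar> < e"
    using d1(2) p by auto
  moreover have "\<bar>(\<Sum>i<n. g (xi i) * (f (x (Suc i)) - f (x i))) - J\<bar> < e"
    using d2(2) p by auto
  ultimately show False unfolding e_def by (auto simp: abs_less_iff abs_if split: if_splits)
qed

lemma RS_integral_eq:
  assumes "has_RS_integral g f a b I" "a \<le> b"
  shows "RS_integral g f a b = I"
  unfolding RS_integral_def using has_RS_unique assms by blast



lemma pigeon_sum:
  fixes a :: "nat \<Rightarrow> real"
  assumes "m > 0" "(\<Sum>i<m. a i) \<ge> s"
  shows "\<exists>i<m. a i \<ge> s / real m"
proof (rule ccontr)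
  assume "\<not> ?thesis"
  then have "\<And>i. i < m \<Longrightarrow> a i < s / real m" by auto
  then have "(\<Sum>i<m. a i) < (\<Sum>i<m. s / real m)"
    using assms(1) by (intro sum_strict_mono) auto
  also have "\<dots> = s" using assms(1) by simp
  finally show False using assms(2) by simp
qed

lemma seq_lemma:
  fixes M :: "nat \<Rightarrow> real" and p :: nat and \<rho> \<theta> A :: real
  assumes M0: "\<And>k. M k \<ge> 0" and p1: "p \<ge> 1" and rho: "\<rho> \<ge> 1" and th0: "\<theta> > 0"
    and th: "\<theta> * (8 * real p * \<rho> ^ p) \<le> 1"
    and grow: "\<And>k. M k \<le> A * \<rho> ^ k"
    and rec: "\<And>\<epsilon>. \<epsilon> > 0 \<Longrightarrow> \<exists>K\<ge>p. \<forall>k\<ge>K. M k \<le> \<epsilon> + \<theta> * (\<Sum>i<2*p. M (k - p + i))"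
    and dpos: "\<delta> > 0"
  shows "\<exists>K. \<forall>k\<ge>K. M k \<le> \<delta>"
proof -
  define S where "S k = (\<Sum>i<2*p. M (k - p + i))" for k
  have rp1: "\<rho> ^ p \<ge> 1" using rho by simp
  obtain K0 where K0: "K0 \<ge> p" "\<And>k. k \<ge> K0 \<Longrightarrow> M k \<le> 1 + \<theta> * S k"
    using rec[of 1] unfolding S_def by auto
  define B1 where "B1 = max 2 (Max (M ` {..<K0}) )"
  have left: "k < K0 \<Longrightarrow> M k \<le> B1" for k
  proof -
    assume "k < K0"
    then have "M k \<le> Max (M ` {..<K0})" by (intro Max.coboundedI) auto
    then show "M k \<le> B1" unfolding B1_def by linarith
  qed
  have step: "\<exists>k'. k' \<le> k + p \<and> M k' \<ge> 2 * \<rho> ^ p * M k" if Mk: "M k > B1" for k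
  proof -
    have kK: "k \<ge> K0" using left[of k] Mk by (meson not_le leD)
    have M2: "M k > 2" using Mk unfolding B1_def by auto
    have "\<theta> * S k \<ge> M k / 2" using K0(2)[OF kK] M2 by simp
    then have "S k \<ge> M k / (2 * \<theta>)" using th0 by (simp add: field_simps)
    then have "\<exists>i<2*p. M (k - p + i) \<ge> M k / (2 * \<theta>) / real (2 * p)"
      using p1 unfolding S_def by (intro pigeon_sum) auto
    then obtain i where i: "i < 2 * p" "M (k - p + i) \<ge> M k / (2 * \<theta>) / real (2 * p)"
      by blast
    have "2 * \<rho> ^ p * M k \<le> M k / (2 * \<theta>) / real (2 * p)"
    proof -
      have h1: "2 * \<rho> ^ p * (4 * real p * \<theta>) \<le> 1" using th by (simp add: algebra_simps)
      have "2 * \<rho> ^ p * M k * (4 * real p * \<theta>) \<le> M k"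
        using mult_right_mono[OF h1 M0[of k]] by (simp add: algebra_simps)
      then show ?thesis using th0 p1 by (simp add: field_simps)
    qed
    moreover have "k - p + i \<le> k + p" using i kK K0 by auto
    ultimately show ?thesis using i by (intro exI[of _ "k - p + i"]) auto
  qed
  have bdd: "M k \<le> B1" for k
  proof (rule ccontr)
    assume "\<not> M k \<le> B1"
    then have Mk: "M k > B1" by simp
    have Mkpos: "M k > 0" using Mk unfolding B1_def by auto
    have chain: "\<exists>k'. k' \<le> k + i * p \<and> M k' \<ge> (2 * \<rho> ^ p) ^ i * M k" for i
    proof (induction i)
      case 0 then show ?case by auto
    next
      case (Suc i)
      then obtain k' where k': "k' \<le> k + i * p" "M k' \<ge> (2 * \<rho> ^ p) ^ i * M k" by blast
      have "(2 * \<rho> ^ p) ^ i \<ge> 1" using rp1 by (intro one_le_power) auto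
      then have "1 * M k \<le> (2 * \<rho> ^ p) ^ i * M k" using Mkpos by (intro mult_right_mono) auto
      then have "M k' \<ge> M k" using k'(2) by simp
      then have "M k' > B1" using Mk by simp
      from step[OF this] obtain k'' where k'': "k'' \<le> k' + p" "M k'' \<ge> 2 * \<rho> ^ p * M k'" by blast
      have "(2 * \<rho> ^ p) ^ Suc i * M k = 2 * \<rho> ^ p * ((2 * \<rho> ^ p) ^ i * M k)" by simp
      also have "\<dots> \<le> 2 * \<rho> ^ p * M k'" using k'(2) rp1 by (intro mult_left_mono) auto
      also have "\<dots> \<le> M k''" by (rule k''(2))
      finally show ?case using k'' k' by (intro exI[of _ k'']) auto
    qed
    obtain i where i: "A * \<rho> ^ k / M k < 2 ^ i" using real_arch_pow[of 2] by auto
    obtain k' where k': "k' \<le> k + i * p" "M k' \<ge> (2 * \<rho> ^ p) ^ i * M k" using chain by blast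
    have "(2 * \<rho> ^ p) ^ i * M k \<le> A * \<rho> ^ k'" using k' grow[of k'] by linarith
    also have "\<dots> \<le> A * \<rho> ^ (k + i * p)"
    proof -
      have A0: "A \<ge> 0" using grow[of 0] M0[of 0] by simp
      show ?thesis using k'(1) rho A0 by (intro mult_left_mono power_increasing) auto
    qed
    also have "\<dots> = A * \<rho> ^ k * (\<rho> ^ p) ^ i" by (simp add: power_add mult.commute[of i p] power_mult)
    finally have "2 ^ i * M k * (\<rho> ^ p) ^ i \<le> A * \<rho> ^ k * (\<rho> ^ p) ^ i"
      by (simp add: power_mult_distrib algebra_simps)
    moreover have "(\<rho> ^ p) ^ i > 0" using rp1 by simp
    ultimately have "2 ^ i * M k \<le> A * \<rho> ^ k" by (simp add: mult_le_cancel_right)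
    then show False using i Mkpos by (simp add: field_simps)
  qed
  define \<epsilon> where "\<epsilon> = \<delta> / 4"
  have e0: "\<epsilon> > 0" unfolding \<epsilon>_def using dpos by simp
  obtain K where K: "K \<ge> p" "\<And>k. k \<ge> K \<Longrightarrow> M k \<le> \<epsilon> + \<theta> * S k"
    using rec[OF e0] unfolding S_def by auto
  define \<theta>' where "\<theta>' = 2 * real p * \<theta>"
  have th'0: "\<theta>' \<ge> 0" unfolding \<theta>'_def using th0 by simp
  have th'1: "\<theta>' \<le> 1/4"
  proof -
    have "\<theta> * (8 * real p) \<le> \<theta> * (8 * real p * \<rho> ^ p)"
      using th0 rp1 p1 by (intro mult_left_mono) auto
    then show ?thesis using th unfolding \<theta>'_def by (simp add: algebra_simps)
  qed
  have B10: "B1 \<ge> 0" unfolding B1_def by simp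
  have iter: "\<forall>k\<ge>K + n * p. M k \<le> \<theta>' ^ n * B1 + 2 * \<epsilon>" for n
  proof (induction n)
    case 0 then show ?case using bdd e0 by (simp add: add_increasing2 less_imp_le)
  next
    case (Suc n)
    show ?case
    proof (intro allI impI)
      fix k assume k: "k \<ge> K + Suc n * p"
      have nb: "M (k - p + i) \<le> \<theta>' ^ n * B1 + 2 * \<epsilon>" for i
        using Suc.IH k by auto
      have "S k \<le> (\<Sum>i<2*p. \<theta>' ^ n * B1 + 2 * \<epsilon>)" unfolding S_def by (rule sum_mono) (use nb in auto)
      also have "\<dots> = 2 * real p * (\<theta>' ^ n * B1 + 2 * \<epsilon>)" by simp
      finally have Sk: "S k \<le> 2 * real p * (\<theta>' ^ n * B1 + 2 * \<epsilon>)" .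
      have "M k \<le> \<epsilon> + \<theta> * S k" using K(2) k by auto
      also have "\<dots> \<le> \<epsilon> + \<theta> * (2 * real p * (\<theta>' ^ n * B1 + 2 * \<epsilon>))"
        using Sk th0 by (intro add_left_mono mult_left_mono) auto
      also have "\<dots> = \<epsilon> + \<theta>' * (\<theta>' ^ n * B1) + \<theta>' * (2 * \<epsilon>)" unfolding \<theta>'_def by (simp add: algebra_simps)
      also have "\<dots> \<le> \<epsilon> + \<theta>' ^ Suc n * B1 + 1/4 * (2 * \<epsilon>)"
      proof -
        have "\<theta>' * (2 * \<epsilon>) \<le> 1/4 * (2 * \<epsilon>)" using th'1 e0 by (intro mult_right_mono) auto
        then show ?thesis by simp
      qed
      also have "\<dots> \<le> \<theta>' ^ Suc n * B1 + 2 * \<epsilon>" using e0 by simp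
      finally show "M k \<le> \<theta>' ^ Suc n * B1 + 2 * \<epsilon>" .
    qed
  qed
  obtain n where n: "\<theta>' ^ n < \<delta> / (2 * (B1 + 1))"
    using real_arch_pow_inv[of "\<delta> / (2 * (B1 + 1))" \<theta>'] dpos B10 th'1 by auto
  have "\<theta>' ^ n * B1 \<le> \<delta> / 2"
  proof -
    have "\<theta>' ^ n * B1 \<le> \<theta>' ^ n * (B1 + 1)" using th'0 by (intro mult_left_mono) auto
    also have "\<dots> \<le> \<delta> / (2 * (B1 + 1)) * (B1 + 1)" using n B10 by (intro mult_right_mono) auto
    also have "\<dots> = \<delta> / 2" using B10 by (simp add: field_simps)
    finally show ?thesis .
  qed
  then show ?thesis using iter[of n] unfolding \<epsilon>_def by (intro exI[of _ "K + n * p"]) auto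
qed



lemma adm_absint:
  fixes f :: "real \<Rightarrow> real"
  assumes adm: "admissible f" and y: "0 \<le> y"
  shows "f absolutely_integrable_on {y..z}" "(\<lambda>t. \<bar>f t\<bar>) absolutely_integrable_on {y..z}"
proof -
  have "f absolutely_integrable_on {0..max z 0}" using adm unfolding admissible_def by auto
  then show fi: "f absolutely_integrable_on {y..z}"
    by (rule absolutely_integrable_on_subinterval) (use y in auto)
  show "(\<lambda>t. \<bar>f t\<bar>) absolutely_integrable_on {y..z}"
    using absolutely_integrable_abs[OF fi] by simp
qed

lemma adm_int_w:
  fixes f w :: "real \<Rightarrow> real"
  assumes adm: "admissible f" and y: "0 \<le> y" and wc: "continuous_on {y..z} w"
  shows "(\<lambda>t. w t * f t) integrable_on {y..z}" "(\<lambda>t. w t * \<bar>f t\<bar>) integrable_on {y..z}"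
proof -
  have "(\<lambda>t. f t * w t) absolutely_integrable_on {y..z}"
    by (rule integ_mult[OF adm_absint(1)[OF adm y] wc])
  then show "(\<lambda>t. w t * f t) integrable_on {y..z}"
    using set_lebesgue_integral_eq_integral(1) by (force simp: mult.commute)
  have "(\<lambda>t. \<bar>f t\<bar> * w t) absolutely_integrable_on {y..z}"
    by (rule integ_mult[OF adm_absint(2)[OF adm y] wc])
  then show "(\<lambda>t. w t * \<bar>f t\<bar>) integrable_on {y..z}"
    using set_lebesgue_integral_eq_integral(1) by (force simp: mult.commute)
qed

lemma adm_bv:
  assumes adm: "admissible f" and "0 < a" "a \<le> b"
  shows "bounded_variation_on f a b"
  using adm assms unfolding admissible_def by auto

lemma piece_bound:
  fixes f :: "real \<Rightarrow> real"
  assumes adm: "admissible f" and u: "0 < u" "u \<le> w"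
    and Wm: "\<And>t. t \<in> {u..w} \<Longrightarrow> t powr (\<nu> - 1) \<le> Wm"
  shows "integral {u..w} (\<lambda>t. t powr (\<nu> - 1) * \<bar>f t\<bar>)
     \<le> \<bar>integral {u..w} (\<lambda>t. t powr (\<nu> - 1) * f t)\<bar> + (w - u) * Wm * total_variation f u w"
proof -
  let ?V = "total_variation f u w"
  have bv: "bounded_variation_on f u w" using adm_bv[OF adm u] .
  have V0: "0 \<le> ?V" using TV_nonneg[OF bv u(2)] .
  have wc: "continuous_on {u..w} (\<lambda>t. t powr (\<nu> - 1))" using u by (intro continuous_intros) auto
  have i1: "(\<lambda>t. t powr (\<nu> - 1) * f t) integrable_on {u..w}" using adm_int_w(1)[OF adm _ wc] u by auto
  have i2: "(\<lambda>t. t powr (\<nu> - 1) * \<bar>f t\<bar>) integrable_on {u..w}" using adm_int_w(2)[OF adm _ wc] u by auto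
  have Wm0: "0 \<le> Wm" using Wm[of u] u by (meson atLeastAtMost_iff order.refl order.trans powr_ge_zero)
  have rest: "0 \<le> (w - u) * Wm * ?V" using u Wm0 V0 by simp
  consider (pos) "\<forall>t\<in>{u..w}. f t \<ge> 0" | (neg) "\<forall>t\<in>{u..w}. f t \<le> 0"
    | (mix) t1 t2 where "t1 \<in> {u..w}" "t2 \<in> {u..w}" "f t1 < 0" "f t2 > 0"
    by (meson not_le)
  then show ?thesis
  proof cases
    case pos
    have "integral {u..w} (\<lambda>t. t powr (\<nu> - 1) * \<bar>f t\<bar>) = integral {u..w} (\<lambda>t. t powr (\<nu> - 1) * f t)"
      by (rule integral_cong) (use pos in auto)
    then show ?thesis using rest by linarith
  next
    case neg
    have "integral {u..w} (\<lambda>t. t powr (\<nu> - 1) * \<bar>f t\<bar>) = integral {u..w} (\<lambda>t. - (t powr (\<nu> - 1) * f t))"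
      by (rule integral_cong) (use neg in auto)
    also have "\<dots> = - integral {u..w} (\<lambda>t. t powr (\<nu> - 1) * f t)" by (rule integral_neg)
    finally show ?thesis using rest by linarith
  next
    case mix
    have pt: "t powr (\<nu> - 1) * \<bar>f t\<bar> \<le> Wm * ?V" if t: "t \<in> {u..w}" for t
    proof -
      have "\<bar>f t\<bar> \<le> ?V"
      proof (cases "f t \<ge> 0")
        case True
        have "\<bar>f t - f t1\<bar> \<le> ?V" using TV_ge_diff2[OF bv, of t1 t] t mix by auto
        then show ?thesis using True mix by auto
      next
        case False
        have "\<bar>f t2 - f t\<bar> \<le> ?V" using TV_ge_diff2[OF bv, of t t2] t mix by auto
        then show ?thesis using False mix by auto
      qed
      then show ?thesis using Wm[OF t] Wm0 by (intro mult_mono) auto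
    qed
    have "integral {u..w} (\<lambda>t. t powr (\<nu> - 1) * \<bar>f t\<bar>) \<le> integral {u..w} (\<lambda>t. Wm * ?V)"
      by (rule integral_le[OF i2]) (use pt in auto)
    also have "\<dots> = (w - u) * Wm * ?V" using u by simp
    finally show ?thesis by linarith
  qed
qed

definition c1 :: "real \<Rightarrow> real" where "c1 \<nu> = max 1 (2 powr (\<nu> - 1))"
definition c2 :: "real \<Rightarrow> real" where "c2 \<nu> = min 1 (2 powr (\<nu> - 1))"

lemma c_pos: "c1 \<nu> > 0" "c2 \<nu> > 0" "c1 \<nu> \<ge> 1"
  unfolding c1_def c2_def by auto

lemma wbound:
  assumes x: "0 < x" and t: "x \<le> t" "t \<le> 2 * x"
  shows "t powr (\<nu> - 1) \<le> c1 \<nu> * x powr (\<nu> - 1)" "c2 \<nu> * x powr (\<nu> - 1) \<le> t powr (\<nu> - 1)"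
proof -
  have e: "(2 * x) powr (\<nu> - 1) = 2 powr (\<nu> - 1) * x powr (\<nu> - 1)" using x by (simp add: powr_mult)
  have xp: "x powr (\<nu> - 1) > 0" using x by simp
  show "t powr (\<nu> - 1) \<le> c1 \<nu> * x powr (\<nu> - 1)"
  proof (cases "\<nu> - 1 \<ge> 0")
    case True
    then have "t powr (\<nu> - 1) \<le> (2 * x) powr (\<nu> - 1)" using t x by (intro powr_mono2) auto
    also have "\<dots> \<le> c1 \<nu> * x powr (\<nu> - 1)" unfolding e c1_def using xp by (intro mult_right_mono) auto
    finally show ?thesis .
  next
    case False
    then have "t powr (\<nu> - 1) \<le> x powr (\<nu> - 1)" using t x by (intro powr_mono2') auto
    also have "\<dots> \<le> c1 \<nu> * x powr (\<nu> - 1)" unfolding c1_def using xp by (simp add: less_imp_le)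
    finally show ?thesis .
  qed
  show "c2 \<nu> * x powr (\<nu> - 1) \<le> t powr (\<nu> - 1)"
  proof (cases "\<nu> - 1 \<ge> 0")
    case True
    have "c2 \<nu> * x powr (\<nu> - 1) \<le> x powr (\<nu> - 1)" unfolding c2_def using xp by (simp add: less_imp_le)
    also have "\<dots> \<le> t powr (\<nu> - 1)" using True t x by (intro powr_mono2) auto
    finally show ?thesis .
  next
    case False
    have "c2 \<nu> * x powr (\<nu> - 1) \<le> (2 * x) powr (\<nu> - 1)" unfolding e c2_def using xp by (intro mult_right_mono) auto
    also have "\<dots> \<le> t powr (\<nu> - 1)" using False t x by (intro powr_mono2') auto
    finally show ?thesis .
  qed
qed

lemma block_bound:
  fixes f :: "real \<Rightarrow> real" and N :: nat
  assumes adm: "admissible f" and x: "0 < x" and N: "N > 0"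
    and cau: "\<And>u v. x \<le> u \<Longrightarrow> u \<le> v \<Longrightarrow> v \<le> 2 * x \<Longrightarrow> \<bar>integral {u..v} (\<lambda>t. t powr (\<nu> - 1) * f t)\<bar> \<le> \<eta>"
  shows "integral {x..2*x} (\<lambda>t. t powr (\<nu> - 1) * \<bar>f t\<bar>)
       \<le> real N * \<eta> + c1 \<nu> * x powr \<nu> / real N * total_variation f x (2 * x)"
proof -
  define q where "q i = x + real i * x / real N" for i
  have q0: "q 0 = x" and qN: "q N = 2 * x" unfolding q_def using N by auto
  have qd: "q (Suc i) - q i = x / real N" for i unfolding q_def using N by (simp add: field_simps)
  have xN: "x / real N > 0" using x N by simp
  have qmono: "q i \<le> q (Suc i)" for i using qd[of i] xN by linarith
  have qge: "x \<le> q i" for i unfolding q_def using x N by simp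
  have qle: "i \<le> N \<Longrightarrow> q i \<le> 2 * x" for i unfolding q_def using x N by (simp add: field_simps)
  let ?g = "\<lambda>t. t powr (\<nu> - 1) * \<bar>f t\<bar>"
  have wc: "continuous_on {x..2*x} (\<lambda>t. t powr (\<nu> - 1))" using x by (intro continuous_intros) auto
  have gi: "?g integrable_on {x..2*x}" using adm_int_w(2)[OF adm _ wc] x by auto
  have "integral {x..2*x} ?g = (\<Sum>i<N. integral {q i..q (Suc i)} ?g)"
    using integral_partition_sum[of N q ?g] qmono gi q0 qN by simp
  also have "\<dots> \<le> (\<Sum>i<N. \<eta> + x / real N * (c1 \<nu> * x powr (\<nu> - 1)) * total_variation f (q i) (q (Suc i)))"
  proof (rule sum_mono)
    fix i assume i: "i \<in> {..<N}"
    have "integral {q i..q (Suc i)} ?g \<le> \<bar>integral {q i..q (Suc i)} (\<lambda>t. t powr (\<nu> - 1) * f t)\<bar>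
       + (q (Suc i) - q i) * (c1 \<nu> * x powr (\<nu> - 1)) * total_variation f (q i) (q (Suc i))"
      by (rule piece_bound[OF adm]) (use qge[of i] x qmono[of i] wbound(1)[OF x] qle[of "Suc i"] i in \<open>auto\<close>)
    moreover have "\<bar>integral {q i..q (Suc i)} (\<lambda>t. t powr (\<nu> - 1) * f t)\<bar> \<le> \<eta>"
      using cau[OF qge[of i] qmono[of i] qle[of "Suc i"]] i by auto
    ultimately show "integral {q i..q (Suc i)} ?g \<le> \<eta> + x / real N * (c1 \<nu> * x powr (\<nu> - 1)) * total_variation f (q i) (q (Suc i))"
      using qd[of i] by simp
  qed
  also have "\<dots> = real N * \<eta> + x / real N * (c1 \<nu> * x powr (\<nu> - 1)) * (\<Sum>i<N. total_variation f (q i) (q (Suc i)))"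
    by (simp add: sum.distrib sum_distrib_left)
  also have "\<dots> \<le> real N * \<eta> + x / real N * (c1 \<nu> * x powr (\<nu> - 1)) * total_variation f x (2 * x)"
  proof -
    have "(\<Sum>i<N. total_variation f (q i) (q (Suc i))) \<le> total_variation f (q 0) (q N)"
      by (rule TV_sum_pieces) (use qmono adm_bv[OF adm] x q0 qN in auto)
    moreover have "0 \<le> x / real N * (c1 \<nu> * x powr (\<nu> - 1))" using x c_pos(1)[of \<nu>] by (intro mult_nonneg_nonneg) auto
    ultimately show ?thesis using q0 qN by (intro add_left_mono mult_left_mono) auto
  qed
  also have "x / real N * (c1 \<nu> * x powr (\<nu> - 1)) = c1 \<nu> * x powr \<nu> / real N"
  proof -
    have "x * x powr (\<nu> - 1) = x powr \<nu>" using powr_mult_base[of x "\<nu> - 1"] x by simp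
    then show ?thesis by (simp add: field_simps)
  qed
  finally show ?thesis .
qed



lemma gm_dyadic:
  fixes f :: "real \<Rightarrow> real" and p :: nat
  assumes adm: "admissible f" and nu: "\<nu> > 0" and C0: "C \<ge> 0" and lam: "lam > 1"
    and gm: "total_variation f x (2 * x) \<le> C * integral {x / lam..lam * x} (\<lambda>t. \<bar>f t\<bar> / t)"
    and lp: "lam \<le> 2 ^ p" and x: "x > 0"
  shows "total_variation f x (2 * x) \<le> C * (x powr (-\<nu>) * (2 ^ p) powr \<nu>) *
            (\<Sum>i<2*p. integral {x / 2^p * 2^i..2 * (x / 2^p * 2^i)} (\<lambda>t. t powr (\<nu> - 1) * \<bar>f t\<bar>))"
proof -
  define q where "q i = x / 2^p * 2^i" for i :: nat
  let ?h = "\<lambda>t. 1 / t * \<bar>f t\<bar>"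
  let ?g = "\<lambda>t. t powr (\<nu> - 1) * \<bar>f t\<bar>"
  define Mx where "Mx y = integral {y..2*y} ?g" for y
  have qpos: "q i > 0" for i unfolding q_def using x by simp
  have qS: "q (Suc i) = 2 * q i" for i unfolding q_def by simp
  have q0: "q 0 = x / 2^p" unfolding q_def by simp
  have q2p: "q (2*p) = x * 2^p" unfolding q_def by (simp add: power_mult_distrib power2_eq_square mult_2 power_add)
  have qmono: "q i \<le> q (Suc i)" for i using qS[of i] qpos[of i] by simp
  have hc: "continuous_on {y..z} (\<lambda>t. 1 / t)" if "y > 0" for y z :: real
    using that by (intro continuous_intros) auto
  have hi: "?h integrable_on {y..z}" if "y > 0" for y z :: real
    using adm_int_w(2)[OF adm _ hc[OF that]] that by auto
  have gc: "continuous_on {y..z} (\<lambda>t. t powr (\<nu> - 1))" if "y > 0" for y z :: real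
    using that by (intro continuous_intros) auto
  have gi: "?g integrable_on {y..z}" if "y > 0" for y z :: real
    using adm_int_w(2)[OF adm _ gc[OF that]] that by auto
  have Mx0: "Mx y \<ge> 0" if "y > 0" for y unfolding Mx_def by (rule integral_nonneg) (use gi that in auto)
  have lam2: "x / 2^p \<le> x / lam" "lam * x \<le> x * 2^p" using lam lp x by (auto simp: field_simps)
  have "integral {x / lam..lam * x} (\<lambda>t. \<bar>f t\<bar> / t) = integral {x / lam..lam * x} ?h" by simp
  also have "\<dots> \<le> integral {q 0..q (2*p)} ?h"
  proof (rule integral_subset_le)
    have x2p: "x / 2^p > 0" using x by simp
    show "{x / lam..lam * x} \<subseteq> {q 0..q (2 * p)}" using lam2 q0 q2p by auto
    show "?h integrable_on {x / lam..lam * x}" using hi x lam by auto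
    show "?h integrable_on {q 0..q (2 * p)}" using hi qpos by auto
    show "\<forall>t\<in>{q 0..q (2 * p)}. 0 \<le> ?h t"
    proof
      fix t assume "t \<in> {q 0..q (2 * p)}"
      then have "t > 0" using qpos[of 0] by auto
      then show "0 \<le> ?h t" by simp
    qed
  qed
  also have "\<dots> = (\<Sum>i<2*p. integral {q i..q (Suc i)} ?h)"
    by (rule integral_partition_sum) (use qmono hi qpos in auto)
  also have "\<dots> \<le> (\<Sum>i<2*p. (q i) powr (-\<nu>) * Mx (q i))"
  proof (rule sum_mono)
    fix i
    have "integral {q i..q (Suc i)} ?h \<le> integral {q i..q (Suc i)} (\<lambda>t. (q i) powr (-\<nu>) * ?g t)"
    proof (rule integral_le)
      show "?h integrable_on {q i..q (Suc i)}" using hi qpos by auto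
      show "(\<lambda>t. (q i) powr (-\<nu>) * ?g t) integrable_on {q i..q (Suc i)}"
        using gi[OF qpos[of i], of "q (Suc i)"] qpos[of i] by simp
      fix t assume t: "t \<in> {q i..q (Suc i)}"
      then have t0: "t > 0" using qpos[of i] by auto
      have e1: "1 / t = t powr (-\<nu>) * t powr (\<nu> - 1)"
      proof -
        have "t powr (-\<nu>) * t powr (\<nu> - 1) = t powr (-\<nu> + (\<nu> - 1))" by (rule powr_add[symmetric])
        also have "\<dots> = t powr (- 1)" by simp
        also have "\<dots> = 1 / t" using t0 by (simp add: powr_minus_divide)
        finally show ?thesis by simp
      qed
      have le1: "1 / t \<le> (q i) powr (-\<nu>) * t powr (\<nu> - 1)"
        unfolding e1 using t qpos[of i] nu by (intro mult_right_mono powr_mono2') auto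
      show "?h t \<le> (q i) powr (-\<nu>) * ?g t"
        using mult_right_mono[OF le1 abs_ge_zero[of "f t"]] by (simp add: mult.assoc)
    qed
        also have "\<dots> = (q i) powr (-\<nu>) * Mx (q i)" unfolding Mx_def qS by simp
    finally show "integral {q i..q (Suc i)} ?h \<le> (q i) powr (-\<nu>) * Mx (q i)" .
  qed
  also have "\<dots> \<le> (\<Sum>i<2*p. (x powr (-\<nu>) * (2 ^ p) powr \<nu>) * Mx (q i))"
  proof (rule sum_mono)
    fix i
    have "(q i) powr (-\<nu>) \<le> (q 0) powr (-\<nu>)"
      using qpos nu mono_idx[of i q 0 i] qmono by (intro powr_mono2') auto
    also have "\<dots> = x powr (-\<nu>) * (2 ^ p) powr \<nu>"
      unfolding q0 by (simp only: powr_divide powr_minus) (simp add: divide_inverse)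
    finally show "(q i) powr (-\<nu>) * Mx (q i) \<le> (x powr (-\<nu>) * (2 ^ p) powr \<nu>) * Mx (q i)"
      using Mx0[OF qpos[of i]] by (intro mult_right_mono) auto
  qed
  also have "\<dots> = (x powr (-\<nu>) * (2 ^ p) powr \<nu>) * (\<Sum>i<2*p. Mx (q i))" by (simp add: sum_distrib_left)
  finally have I: "integral {x / lam..lam * x} (\<lambda>t. \<bar>f t\<bar> / t) \<le> (x powr (-\<nu>) * (2 ^ p) powr \<nu>) * (\<Sum>i<2*p. Mx (q i))" .
  show ?thesis using gm mult_left_mono[OF I C0] unfolding Mx_def q_def by (simp add: mult.assoc)
qed

lemma pointwise_bound:
  fixes f :: "real \<Rightarrow> real"
  assumes adm: "admissible f" and x: "x > 0" and s: "x \<le> s" "s \<le> 2 * x"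
  shows "\<bar>f s\<bar> * (c2 \<nu> * x powr \<nu>) \<le> integral {x..2*x} (\<lambda>t. t powr (\<nu> - 1) * \<bar>f t\<bar>)
           + c1 \<nu> * x powr \<nu> * total_variation f x (2 * x)"
proof -
  let ?V = "total_variation f x (2 * x)"
  let ?g = "\<lambda>t. t powr (\<nu> - 1) * \<bar>f t\<bar>"
  have bv: "bounded_variation_on f x (2*x)" using adm_bv[OF adm x] x by auto
  have V0: "0 \<le> ?V" using TV_nonneg[OF bv] x by auto
  have gc: "continuous_on {x..2*x} (\<lambda>t. t powr (\<nu> - 1))" using x by (intro continuous_intros) auto
  have gi: "?g integrable_on {x..2*x}" using adm_int_w(2)[OF adm _ gc] x by auto
  have "integral {x..2*x} (\<lambda>t. c2 \<nu> * x powr (\<nu> - 1) * \<bar>f s\<bar>)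
      \<le> integral {x..2*x} (\<lambda>t. ?g t + c1 \<nu> * x powr (\<nu> - 1) * ?V)"
  proof (rule integral_le)
    show "(\<lambda>t. c2 \<nu> * x powr (\<nu> - 1) * \<bar>f s\<bar>) integrable_on {x..2*x}"
      by (rule Henstock_Kurzweil_Integration.integrable_const_ivl)
    show "(\<lambda>t. ?g t + c1 \<nu> * x powr (\<nu> - 1) * ?V) integrable_on {x..2*x}"
      using gi by (intro integrable_add) auto
    fix t assume t: "t \<in> {x..2*x}"
    have fs: "\<bar>f s\<bar> \<le> \<bar>f t\<bar> + ?V" using TV_ge_diff2[OF bv, of t s] t s by auto
    have "c2 \<nu> * x powr (\<nu> - 1) * \<bar>f s\<bar> \<le> t powr (\<nu> - 1) * \<bar>f s\<bar>"
      using wbound(2)[OF x, of t \<nu>] t by (intro mult_right_mono) auto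
    also have "\<dots> \<le> t powr (\<nu> - 1) * (\<bar>f t\<bar> + ?V)" using fs by (intro mult_left_mono) auto
    also have "\<dots> = ?g t + t powr (\<nu> - 1) * ?V" by (simp add: algebra_simps)
    also have "\<dots> \<le> ?g t + c1 \<nu> * x powr (\<nu> - 1) * ?V"
      using wbound(1)[OF x, of t \<nu>] t V0 by (intro add_left_mono mult_right_mono) auto
    finally show "c2 \<nu> * x powr (\<nu> - 1) * \<bar>f s\<bar> \<le> ?g t + c1 \<nu> * x powr (\<nu> - 1) * ?V" .
  qed
  also have "\<dots> = integral {x..2*x} ?g + x * (c1 \<nu> * x powr (\<nu> - 1) * ?V)"
    using integral_add[OF gi Henstock_Kurzweil_Integration.integrable_const_ivl[of "c1 \<nu> * x powr (\<nu> - 1) * ?V" x "2*x"]] x by simp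
  finally have "x * (c2 \<nu> * x powr (\<nu> - 1) * \<bar>f s\<bar>) \<le> integral {x..2*x} ?g + x * (c1 \<nu> * x powr (\<nu> - 1) * ?V)"
    using x by (simp add: mult_ac)
  moreover have xx: "x * x powr (\<nu> - 1) = x powr \<nu>" using powr_mult_base[of x "\<nu> - 1"] x by simp
  moreover have "\<bar>f s\<bar> * (c2 \<nu> * x powr \<nu>) = x * (c2 \<nu> * x powr (\<nu> - 1) * \<bar>f s\<bar>)"
    by (simp add: xx[symmetric] algebra_simps)
  moreover have "c1 \<nu> * x powr \<nu> * ?V = x * (c1 \<nu> * x powr (\<nu> - 1) * ?V)"
    by (simp add: xx[symmetric] algebra_simps)
  ultimately show ?thesis by linarith
qed

lemma f_bdd:
  fixes f :: "real \<Rightarrow> real"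
  assumes adm: "admissible f"
  shows "\<exists>B\<ge>0. \<forall>t\<ge>1. \<bar>f t\<bar> \<le> B"
proof -
  have "(f \<longlongrightarrow> 0) at_top" using adm unfolding admissible_def by auto
  from tendstoD[OF this, of 1] have "eventually (\<lambda>t. \<bar>f t\<bar> < 1) at_top"
    by (simp add: dist_real_def)
  then obtain X where X: "\<And>t. t \<ge> X \<Longrightarrow> \<bar>f t\<bar> < 1" unfolding eventually_at_top_linorder by blast
  define Y where "Y = max X 1"
  have bv: "bounded_variation_on f 1 Y" using adm_bv[OF adm] unfolding Y_def by auto
  define B where "B = max 1 (\<bar>f 1\<bar> + total_variation f 1 Y)"
  have "\<bar>f t\<bar> \<le> B" if t: "t \<ge> 1" for t
  proof (cases "t \<ge> X")
    case True then show ?thesis using X[of t] unfolding B_def by auto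
  next
    case False
    then have "t \<le> Y" unfolding Y_def by auto
    then have "\<bar>f t - f 1\<bar> \<le> total_variation f 1 Y" using TV_ge_diff2[OF bv, of 1 t] t by auto
    then show ?thesis unfolding B_def by auto
  qed
  then show ?thesis unfolding B_def by (intro exI[of _ "max 1 (\<bar>f 1\<bar> + total_variation f 1 Y)"]) auto
qed

lemma growth_bound:
  fixes f :: "real \<Rightarrow> real"
  assumes adm: "admissible f" and B: "\<forall>t\<ge>1. \<bar>f t\<bar> \<le> B" and x: "x \<ge> 1"
  shows "integral {x..2*x} (\<lambda>t. t powr (\<nu> - 1) * \<bar>f t\<bar>) \<le> c1 \<nu> * B * x powr \<nu>"
proof -
  have x0: "x > 0" using x by simp
  have gc: "continuous_on {x..2*x} (\<lambda>t. t powr (\<nu> - 1))" using x by (intro continuous_intros) auto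
  have gi: "(\<lambda>t. t powr (\<nu> - 1) * \<bar>f t\<bar>) integrable_on {x..2*x}" using adm_int_w(2)[OF adm _ gc] x by auto
  have B0: "B \<ge> 0" using B x by force
  have "integral {x..2*x} (\<lambda>t. t powr (\<nu> - 1) * \<bar>f t\<bar>) \<le> integral {x..2*x} (\<lambda>t. c1 \<nu> * x powr (\<nu> - 1) * B)"
  proof (rule integral_le[OF gi])
    fix t assume t: "t \<in> {x..2*x}"
    show "t powr (\<nu> - 1) * \<bar>f t\<bar> \<le> c1 \<nu> * x powr (\<nu> - 1) * B"
      using wbound(1)[OF x0, of t \<nu>] t B x c_pos(1)[of \<nu>] by (intro mult_mono) auto
  qed (rule Henstock_Kurzweil_Integration.integrable_const_ivl)
  also have "\<dots> = c1 \<nu> * B * (x * x powr (\<nu> - 1))" using x by (simp add: algebra_simps)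
  also have "x * x powr (\<nu> - 1) = x powr \<nu>" using powr_mult_base[of x "\<nu> - 1"] x by simp
  finally show ?thesis .
qed

lemma cauchy_from_improper:
  fixes \<phi> :: "real \<Rightarrow> real"
  assumes imp: "improper_integral_0_inf \<phi> L" and e: "\<epsilon> > 0"
  shows "\<exists>X>0. \<forall>u v. X \<le> u \<longrightarrow> u \<le> v \<longrightarrow> \<bar>integral {u..v} \<phi>\<bar> \<le> \<epsilon>"
proof -
  have int: "\<And>a b. 0 < a \<Longrightarrow> a \<le> b \<Longrightarrow> \<phi> integrable_on {a..b}"
    and lim: "((\<lambda>(a, b). integral {a..b} \<phi>) \<longlongrightarrow> L) (at_right 0 \<times>\<^sub>F at_top)"
    using imp unfolding improper_integral_0_inf_def by auto
  have "eventually (\<lambda>p. dist ((\<lambda>(a, b). integral {a..b} \<phi>) p) L < \<epsilon> / 2) (at_right 0 \<times>\<^sub>F at_top)"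
    using tendstoD[OF lim, of "\<epsilon>/2"] e by simp
  then obtain Pf Pg where P: "eventually Pf (at_right (0::real))" "eventually Pg (at_top :: real filter)"
    "\<And>a b. Pf a \<Longrightarrow> Pg b \<Longrightarrow> \<bar>integral {a..b} \<phi> - L\<bar> < \<epsilon> / 2"
    unfolding eventually_prod_filter by (auto simp: dist_real_def)
  have lt1: "eventually (\<lambda>a. a < 1) (at_right (0::real))"
    unfolding eventually_at_right_field by (intro exI[of _ 1]) auto
  have "eventually (\<lambda>a. Pf a \<and> 0 < a \<and> a < 1) (at_right (0::real))"
    using eventually_conj[OF P(1) eventually_conj[OF eventually_at_right_less lt1]] by simp
  then obtain a where a: "Pf a" "0 < a" "a < 1"
    using eventually_happens[of _ "at_right (0::real)"] trivial_limit_at_right_real by blast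
  obtain N where N: "\<And>b. b \<ge> N \<Longrightarrow> Pg b" using P(2) unfolding eventually_at_top_linorder by blast
  define X where "X = max N 1"
  have "\<bar>integral {u..v} \<phi>\<bar> \<le> \<epsilon>" if uv: "X \<le> u" "u \<le> v" for u v
  proof -
    have au: "a \<le> u" using uv a unfolding X_def by auto
    have i: "\<phi> integrable_on {a..v}" using int[of a v] a au uv by auto
    have "integral {a..u} \<phi> + integral {u..v} \<phi> = integral {a..v} \<phi>"
      by (rule Henstock_Kurzweil_Integration.integral_combine[OF au uv(2) i])
    moreover have "\<bar>integral {a..u} \<phi> - L\<bar> < \<epsilon> / 2" using P(3)[OF a(1) N] uv unfolding X_def by auto
    moreover have "\<bar>integral {a..v} \<phi> - L\<bar> < \<epsilon> / 2" using P(3)[OF a(1) N] uv unfolding X_def by auto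
    ultimately show ?thesis by linarith
  qed
  then show ?thesis unfolding X_def by (intro exI[of _ "max N 1"]) auto
qed



lemma dyadic_bracket:
  fixes s :: real
  assumes s: "s \<ge> 1"
  shows "\<exists>k. 2 ^ k \<le> s \<and> s < 2 ^ Suc k"
proof -
  obtain n where n: "s < 2 ^ n" using real_arch_pow[of 2 s] by auto
  define m where "m = (LEAST j. s < (2::real) ^ j)"
  have m1: "s < 2 ^ m" unfolding m_def by (rule LeastI[of _ n]) (rule n)
  have m0: "m \<noteq> 0"
  proof
    assume "m = 0" then show False using m1 s by simp
  qed
  then obtain k where k: "m = Suc k" by (cases m) auto
  have "\<not> s < 2 ^ k" unfolding m_def
  proof
    assume "s < 2 ^ k"
    then have "m \<le> k" unfolding m_def by (rule Least_le)
    then show False using k by simp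
  qed
  then show ?thesis using m1 k by (intro exI[of _ k]) auto
qed

lemma GM_decay:
  fixes f :: "real \<Rightarrow> real"
  assumes GM: "GM f" and nu: "\<nu> > 0" and imp: "improper_integral_0_inf (\<lambda>t. t powr (\<nu> - 1) * f t) L"
  shows "((\<lambda>t. t powr \<nu> * f t) \<longlongrightarrow> 0) at_top"
proof -
  have adm: "admissible f" using GM unfolding GM_def by auto
  obtain C lam where C: "C > 1" and lam: "lam > 1"
    and gm: "\<And>x. x > 0 \<Longrightarrow> total_variation f x (2 * x) \<le> C * integral {x / lam..lam * x} (\<lambda>t. \<bar>f t\<bar> / t)"
    using GM unfolding GM_def by auto
  obtain n where n: "lam < 2 ^ n" using real_arch_pow[of 2 lam] by auto
  define p where "p = max 1 n"
  have p1: "p \<ge> 1" unfolding p_def by simp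
  have lp: "lam \<le> 2 ^ p"
  proof -
    have "(2::real) ^ n \<le> 2 ^ p" unfolding p_def by (intro power_increasing) auto
    then show ?thesis using n by linarith
  qed
  let ?g = "\<lambda>t. t powr (\<nu> - 1) * \<bar>f t\<bar>"
  define Mx where "Mx y = integral {y..2*y} ?g" for y
  define M where "M k = Mx (2 ^ k)" for k :: nat
  define \<rho> where "\<rho> = (2::real) powr \<nu>"
  define KC where "KC = C * (2 ^ p) powr \<nu>"
  have rho1: "\<rho> \<ge> 1" unfolding \<rho>_def using nu by (simp add: ge_one_powr_ge_zero)
  have KC0: "KC > 0" unfolding KC_def using C by simp
  have c10: "c1 \<nu> > 0" "c2 \<nu> > 0" using c_pos by auto
  define N :: nat where "N = nat (ceiling (c1 \<nu> * KC * (8 * real p * \<rho> ^ p))) + 1"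
  have N0: "N > 0" unfolding N_def by simp
  have NN: "c1 \<nu> * KC * (8 * real p * \<rho> ^ p) \<le> real N" unfolding N_def by linarith
  define \<theta> where "\<theta> = c1 \<nu> * KC / real N"
  have th0: "\<theta> > 0" unfolding \<theta>_def using c10 KC0 N0 by simp
  have th: "\<theta> * (8 * real p * \<rho> ^ p) \<le> 1"
    unfolding \<theta>_def using NN N0 by (simp add: field_simps)
  have gc: "continuous_on {y..z} (\<lambda>t. t powr (\<nu> - 1))" if "y > 0" for y z :: real
    using that by (intro continuous_intros) auto
  have gi: "?g integrable_on {y..z}" if "y > 0" for y z :: real
    using adm_int_w(2)[OF adm _ gc[OF that]] that by auto
  have M0: "M k \<ge> 0" for k unfolding M_def Mx_def by (rule integral_nonneg) (use gi in auto)
  have pow_idx: "(2::real) ^ k / 2 ^ p * 2 ^ i = 2 ^ (k - p + i)" if "k \<ge> p" for k i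
  proof -
    have "(2::real) ^ k = 2 ^ (k - p) * 2 ^ p" using that by (simp add: power_add[symmetric])
    then show ?thesis by (simp add: power_add)
  qed
  have TVb: "total_variation f (2^k) (2 * 2^k) \<le> KC * (2 ^ k) powr (-\<nu>) * (\<Sum>i<2*p. M (k - p + i))"
    if k: "k \<ge> p" for k
  proof -
    have "total_variation f (2^k) (2 * 2^k) \<le> C * ((2^k) powr (-\<nu>) * (2 ^ p) powr \<nu>) *
            (\<Sum>i<2*p. integral {2^k / 2^p * 2^i..2 * (2^k / 2^p * 2^i)} ?g)"
      by (rule gm_dyadic[OF adm nu _ lam gm lp]) (use C in auto)
    also have "(\<Sum>i<2*p. integral {2^k / 2^p * 2^i..2 * (2^k / 2^p * 2^i)} ?g) = (\<Sum>i<2*p. M (k - p + i))"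
      unfolding M_def Mx_def pow_idx[OF k] ..
    finally show ?thesis unfolding KC_def by (simp add: algebra_simps)
  qed
  have xpow: "((2::real) ^ k) powr \<nu> = \<rho> ^ k" for k
  proof -
    have "((2::real) ^ k) powr \<nu> = (2 powr real k) powr \<nu>" by (simp add: powr_realpow)
    also have "\<dots> = 2 powr (real k * \<nu>)" by (rule powr_powr)
    also have "\<dots> = \<rho> ^ k" unfolding \<rho>_def by (simp add: powr_power)
    finally show ?thesis .
  qed
  have xpm: "((2::real) ^ k) powr \<nu> * ((2::real) ^ k) powr (-\<nu>) = 1" for k
    by (simp add: powr_add[symmetric])
  have rec: "\<exists>K\<ge>p. \<forall>k\<ge>K. M k \<le> \<epsilon> + \<theta> * (\<Sum>i<2*p. M (k - p + i))" if e: "\<epsilon> > 0" for \<epsilon>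
  proof -
    have eN: "\<epsilon> / real N > 0" using e N0 by simp
    obtain X where X: "X > 0" "\<And>u v. X \<le> u \<Longrightarrow> u \<le> v \<Longrightarrow> \<bar>integral {u..v} (\<lambda>t. t powr (\<nu> - 1) * f t)\<bar> \<le> \<epsilon> / real N"
      using cauchy_from_improper[OF imp eN] by blast
    obtain m where m: "X < 2 ^ m" using real_arch_pow[of 2 X] by auto
    have "M k \<le> \<epsilon> + \<theta> * (\<Sum>i<2*p. M (k - p + i))" if k: "k \<ge> max p m" for k
    proof -
      have xX: "X \<le> 2 ^ k"
      proof -
        have "(2::real) ^ m \<le> 2 ^ k" using k by (intro power_increasing) auto
        then show ?thesis using m by linarith
      qed
      have "M k \<le> real N * (\<epsilon> / real N) + c1 \<nu> * (2^k) powr \<nu> / real N * total_variation f (2^k) (2 * 2^k)"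
        unfolding M_def Mx_def
        by (rule block_bound[OF adm _ N0]) (use X(2) xX in auto)
      also have "\<dots> \<le> \<epsilon> + c1 \<nu> * (2^k) powr \<nu> / real N * (KC * (2 ^ k) powr (-\<nu>) * (\<Sum>i<2*p. M (k - p + i)))"
        using TVb[of k] k N0 c10 by (intro add_mono mult_left_mono) auto
      also have "c1 \<nu> * (2^k) powr \<nu> / real N * (KC * (2 ^ k) powr (-\<nu>) * (\<Sum>i<2*p. M (k - p + i)))
           = \<theta> * (\<Sum>i<2*p. M (k - p + i))"
        unfolding \<theta>_def using xpm[of k] by (simp add: field_simps)
      finally show ?thesis .
    qed
    then show ?thesis by (intro exI[of _ "max p m"]) auto
  qed
  obtain B where B: "B \<ge> 0" "\<forall>t\<ge>1. \<bar>f t\<bar> \<le> B" using f_bdd[OF adm] by blast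
  have grow: "M k \<le> (c1 \<nu> * B) * \<rho> ^ k" for k
    using growth_bound[OF adm B(2), of "2^k" \<nu>] unfolding M_def Mx_def xpow by simp
  have Mlim: "\<exists>K. \<forall>k\<ge>K. M k \<le> \<delta>" if "\<delta> > 0" for \<delta>
    by (rule seq_lemma[OF M0 p1 rho1 th0 th grow rec that])
  define D where "D = 2 powr \<nu> / c2 \<nu> * (1 + c1 \<nu> * KC * 2 * real p)"
  have D0: "D > 0" unfolding D_def using c10 KC0 by (simp add: add_pos_nonneg)
  have pw: "\<bar>s powr \<nu> * f s\<bar> \<le> D * \<delta>'"
    if k: "k \<ge> p" and s: "2^k \<le> s" "s \<le> 2 * 2^k" and Mk: "\<forall>j\<ge>k - p. M j \<le> \<delta>'" for k s \<delta>'
  proof -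
    define x :: real where "x = 2 ^ k"
    have x0: "x > 0" unfolding x_def by simp
    have d0: "\<delta>' \<ge> 0" using Mk M0[of k] by (meson diff_le_self order.trans)
    have S: "(\<Sum>i<2*p. M (k - p + i)) \<le> 2 * real p * \<delta>'"
    proof -
      have "(\<Sum>i<2*p. M (k - p + i)) \<le> (\<Sum>i<2*p. \<delta>')" by (rule sum_mono) (use Mk in auto)
      then show ?thesis by simp
    qed
    have "\<bar>f s\<bar> * (c2 \<nu> * x powr \<nu>) \<le> Mx x + c1 \<nu> * x powr \<nu> * total_variation f x (2 * x)"
      unfolding Mx_def by (rule pointwise_bound[OF adm x0]) (use s in \<open>auto simp: x_def\<close>)
    also have "\<dots> \<le> \<delta>' + c1 \<nu> * x powr \<nu> * (KC * x powr (-\<nu>) * (2 * real p * \<delta>'))"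
    proof (intro add_mono mult_left_mono)
      show "Mx x \<le> \<delta>'" using Mk k unfolding M_def x_def by auto
      have "total_variation f x (2 * x) \<le> KC * x powr (-\<nu>) * (\<Sum>i<2*p. M (k - p + i))"
        using TVb[OF k] unfolding x_def .
      also have "\<dots> \<le> KC * x powr (-\<nu>) * (2 * real p * \<delta>')"
        using S KC0 x0 by (intro mult_left_mono) auto
      finally show "total_variation f x (2 * x) \<le> KC * x powr (-\<nu>) * (2 * real p * \<delta>')" .
      show "0 \<le> c1 \<nu> * x powr \<nu>" using c10 by simp
    qed
    also have "\<dots> = \<delta>' * (1 + c1 \<nu> * KC * 2 * real p)"
      using xpm[of k] unfolding x_def by (simp add: algebra_simps)
    finally have fs: "\<bar>f s\<bar> * (c2 \<nu> * x powr \<nu>) \<le> \<delta>' * (1 + c1 \<nu> * KC * 2 * real p)" .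
    have sp: "s powr \<nu> \<le> 2 powr \<nu> * x powr \<nu>"
    proof -
      have "s powr \<nu> \<le> (2 * x) powr \<nu>" using s x0 nu by (intro powr_mono2) (auto simp: x_def)
      also have "\<dots> = 2 powr \<nu> * x powr \<nu>" by (simp add: powr_mult)
      finally show ?thesis .
    qed
    have "\<bar>s powr \<nu> * f s\<bar> = s powr \<nu> * \<bar>f s\<bar>" by (simp add: abs_mult)
    also have "\<dots> \<le> 2 powr \<nu> * x powr \<nu> * \<bar>f s\<bar>" using sp by (intro mult_right_mono) auto
    also have "\<dots> = 2 powr \<nu> / c2 \<nu> * (\<bar>f s\<bar> * (c2 \<nu> * x powr \<nu>))" using c10 by (simp add: field_simps)
    also have "\<dots> \<le> 2 powr \<nu> / c2 \<nu> * (\<delta>' * (1 + c1 \<nu> * KC * 2 * real p))"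
      using fs c10 by (intro mult_left_mono) auto
    also have "\<dots> = D * \<delta>'" unfolding D_def by (simp add: algebra_simps)
    finally show ?thesis .
  qed
  show ?thesis
  proof (rule tendstoI)
    fix e :: real assume e: "e > 0"
    define \<delta>' where "\<delta>' = e / (2 * D)"
    have d': "\<delta>' > 0" unfolding \<delta>'_def using e D0 by simp
    obtain K where K: "\<And>k. k \<ge> K \<Longrightarrow> M k \<le> \<delta>'" using Mlim[OF d'] by blast
    have "eventually (\<lambda>s::real. s \<ge> 2 ^ (K + p)) at_top" by (rule eventually_ge_at_top)
    then show "eventually (\<lambda>s. dist (s powr \<nu> * f s) 0 < e) at_top"
    proof (rule eventually_mono)
      fix s :: real assume s: "s \<ge> 2 ^ (K + p)"
      have s1: "s \<ge> 1" using s by (meson one_le_numeral one_le_power order.trans)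
      obtain k where k: "2 ^ k \<le> s" "s < 2 ^ Suc k" using dyadic_bracket[OF s1] by blast
      have kK: "k \<ge> K + p"
      proof (rule ccontr)
        assume "\<not> k \<ge> K + p"
        then have "Suc k \<le> K + p" by simp
        then have "(2::real) ^ Suc k \<le> 2 ^ (K + p)" by (intro power_increasing) auto
        then show False using k s by simp
      qed
      have "\<bar>s powr \<nu> * f s\<bar> \<le> D * \<delta>'"
        by (rule pw[of k]) (use kK k K in auto)
      also have "\<dots> < e" unfolding \<delta>'_def using D0 e by (simp add: field_simps)
      finally show "dist (s powr \<nu> * f s) 0 < e" by (simp add: dist_real_def)
    qed
  qed
qed



lemma RS_formula:
  fixes f :: "real \<Rightarrow> real"
  assumes adm: "admissible f" and a: "0 < a" "a \<le> b"
  shows "has_RS_integral (\<lambda>t. t powr \<nu>) f a b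
           (b powr \<nu> * f b - a powr \<nu> * f a - \<nu> * integral {a..b} (\<lambda>t. t powr (\<nu> - 1) * f t))"
    "(\<lambda>t. t powr (\<nu> - 1) * f t) integrable_on {a..b}"
proof -
  have fi: "f absolutely_integrable_on {a..b}"
    using adm a unfolding admissible_def
    by (meson absolutely_integrable_on_subinterval atLeastatMost_subset_iff order.refl less_imp_le order.trans)
  have bv: "bounded_variation_on f a b" using adm a unfolding admissible_def by auto
  have gc: "continuous_on {a..b} (\<lambda>t. \<nu> * t powr (\<nu> - 1))"
    using a by (intro continuous_intros) auto
  have gc2: "continuous_on {a..b} (\<lambda>t. t powr (\<nu> - 1))"
    using a by (intro continuous_intros) auto
  have ii: "(\<lambda>t. f t * t powr (\<nu> - 1)) integrable_on {a..b}"
    using integ_mult[OF fi gc2] set_lebesgue_integral_eq_integral(1) by blast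
  then show "(\<lambda>t. t powr (\<nu> - 1) * f t) integrable_on {a..b}" by (simp add: mult.commute)
  have "has_RS_integral (\<lambda>t. t powr \<nu>) f a b
     (b powr \<nu> * f b - a powr \<nu> * f a - integral {a..b} (\<lambda>t. f t * (\<nu> * t powr (\<nu> - 1))))"
    by (rule RS_by_parts[OF a(2) fi bv _ gc]) (use a in \<open>auto intro!: has_real_derivative_powr\<close>)
  moreover have "integral {a..b} (\<lambda>t. f t * (\<nu> * t powr (\<nu> - 1))) = \<nu> * integral {a..b} (\<lambda>t. t powr (\<nu> - 1) * f t)"
  proof -
    have "integral {a..b} (\<lambda>t. \<nu> * (t powr (\<nu> - 1) * f t)) = \<nu> * integral {a..b} (\<lambda>t. t powr (\<nu> - 1) * f t)"
      by (rule integral_mult_right)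
    then show ?thesis by (simp add: algebra_simps)
  qed
  ultimately show "has_RS_integral (\<lambda>t. t powr \<nu>) f a b
           (b powr \<nu> * f b - a powr \<nu> * f a - \<nu> * integral {a..b} (\<lambda>t. t powr (\<nu> - 1) * f t))" by simp
qed

theorem mainTheorem2:
  fixes f :: "real \<Rightarrow> real" and \<nu> :: real
  assumes "GM f"
    and "\<nu> \<noteq> 0"
    and "((\<lambda>t. t powr \<nu> * f t) \<longlongrightarrow> 0) (at_right 0)"
  shows "((\<exists>L. improper_integral_0_inf (\<lambda>t. t powr (\<nu> - 1) * f t) L) \<longleftrightarrow>
           (((\<lambda>t. t powr \<nu> * f t) \<longlongrightarrow> 0) at_top \<and>
            (\<exists>M. improper_RS_integral_0_inf (\<lambda>t. t powr \<nu>) f M)))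
       \<and> (\<forall>L M. improper_integral_0_inf (\<lambda>t. t powr (\<nu> - 1) * f t) L \<longrightarrow>
                improper_RS_integral_0_inf (\<lambda>t. t powr \<nu>) f M \<longrightarrow>
                L = - M / \<nu>)"
proof -
  note GM = assms(1) and nu = assms(2) and H0 = assms(3)
  have adm: "admissible f" using GM unfolding GM_def by auto
  define H where "H t = t powr \<nu> * f t" for t
  define J where "J p = integral {fst p..snd p} (\<lambda>t. t powr (\<nu> - 1) * f t)" for p :: "real \<times> real"
  define R where "R p = RS_integral (\<lambda>t. t powr \<nu>) f (fst p) (snd p)" for p :: "real \<times> real"
  define F where "F = at_right (0::real) \<times>\<^sub>F (at_top :: real filter)"
  have Fnb: "F \<noteq> bot" unfolding F_def prod_filter_eq_bot using trivial_limit_at_top_linorder trivial_limit_at_right_real by auto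
  have ev: "eventually (\<lambda>p. 0 < fst p \<and> fst p \<le> snd p) F"
    unfolding F_def eventually_prod_filter
    by (intro exI[of _ "\<lambda>a. 0 < a \<and> a < 1"] exI[of _ "\<lambda>b. 1 \<le> b"])
       (auto simp: eventually_at_right_less eventually_at_right_field intro!: eventually_ge_at_top exI[of _ 1])
  have RJ: "R p = H (snd p) - H (fst p) - \<nu> * J p" if "0 < fst p" "fst p \<le> snd p" for p
    unfolding R_def H_def J_def using RS_integral_eq[OF RS_formula(1)[OF adm that] that(2)] .
  have fstF: "filterlim fst (at_right 0) F" unfolding F_def filterlim_def by (rule filtermap_fst_prod_filter)
  have sndF: "filterlim snd at_top F" unfolding F_def filterlim_def by (rule filtermap_snd_prod_filter)
  have Ha: "((\<lambda>p. H (fst p)) \<longlongrightarrow> 0) F"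
    using filterlim_compose[OF H0 fstF] unfolding H_def by simp
  have Jint: "\<forall>a b. 0 < a \<longrightarrow> a \<le> b \<longrightarrow> (\<lambda>t. t powr (\<nu> - 1) * f t) integrable_on {a..b}"
    using RS_formula(2)[OF adm] by blast
  have RSex: "\<forall>a b. 0 < a \<longrightarrow> a \<le> b \<longrightarrow> (\<exists>I. has_RS_integral (\<lambda>t. t powr \<nu>) f a b I)"
    using RS_formula(1)[OF adm] by blast
  have impI': "improper_integral_0_inf (\<lambda>t. t powr (\<nu> - 1) * f t) L \<longleftrightarrow> (J \<longlongrightarrow> L) F" for L
    unfolding improper_integral_0_inf_def J_def F_def using Jint by (simp add: case_prod_beta')
  have impR': "improper_RS_integral_0_inf (\<lambda>t. t powr \<nu>) f M \<longleftrightarrow> (R \<longlongrightarrow> M) F" for M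
    unfolding improper_RS_integral_0_inf_def R_def F_def using RSex by (simp add: case_prod_beta')
  have fwd: "(H \<longlongrightarrow> 0) at_top \<and> (R \<longlongrightarrow> - \<nu> * L) F" if JL: "(J \<longlongrightarrow> L) F" for L
  proof -
    have Htop: "(H \<longlongrightarrow> 0) at_top"
    proof (cases "\<nu> > 0")
      case True
      then show ?thesis using GM_decay[OF GM True] JL impI' unfolding H_def by blast
    next
      case False
      then have "\<nu> < 0" using nu by auto
      then have "((\<lambda>t. t powr \<nu>) \<longlongrightarrow> 0) at_top" by (intro tendsto_neg_powr filterlim_ident)
      moreover have "(f \<longlongrightarrow> 0) at_top" using adm unfolding admissible_def by auto
      ultimately show ?thesis unfolding H_def using tendsto_mult by fastforce
    qed
    have Hb: "((\<lambda>p. H (snd p)) \<longlongrightarrow> 0) F" using filterlim_compose[OF Htop sndF] by simp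
    have "((\<lambda>p. H (snd p) - H (fst p) - \<nu> * J p) \<longlongrightarrow> 0 - 0 - \<nu> * L) F"
      by (intro tendsto_intros Hb Ha JL)
    then have "(R \<longlongrightarrow> 0 - 0 - \<nu> * L) F"
      by (rule Lim_transform_eventually) (use ev RJ in \<open>auto elim!: eventually_mono\<close>)
    then show ?thesis using Htop by simp
  qed
  have bwd: "(J \<longlongrightarrow> - M / \<nu>) F" if Ht: "(H \<longlongrightarrow> 0) at_top" and RM: "(R \<longlongrightarrow> M) F" for M
  proof -
    have Hb: "((\<lambda>p. H (snd p)) \<longlongrightarrow> 0) F" using filterlim_compose[OF Ht sndF] by simp
    have "((\<lambda>p. (H (snd p) - H (fst p) - R p) / \<nu>) \<longlongrightarrow> (0 - 0 - M) / \<nu>) F"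
      by (intro tendsto_intros Hb Ha RM) (use nu in auto)
    then have t: "((\<lambda>p. (H (snd p) - H (fst p) - R p) / \<nu>) \<longlongrightarrow> - M / \<nu>) F" by simp
    have "eventually (\<lambda>p. (H (snd p) - H (fst p) - R p) / \<nu> = J p) F"
      using ev by (rule eventually_mono) (use RJ nu in auto)
    from Lim_transform_eventually[OF t this] show ?thesis .
  qed
  show ?thesis
  proof (intro conjI allI impI)
    show "(\<exists>L. improper_integral_0_inf (\<lambda>t. t powr (\<nu> - 1) * f t) L) \<longleftrightarrow>
           (((\<lambda>t. t powr \<nu> * f t) \<longlongrightarrow> 0) at_top \<and> (\<exists>M. improper_RS_integral_0_inf (\<lambda>t. t powr \<nu>) f M))"
    proof
      assume "\<exists>L. improper_integral_0_inf (\<lambda>t. t powr (\<nu> - 1) * f t) L"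
      then obtain L where "(J \<longlongrightarrow> L) F" using impI' by blast
      from fwd[OF this] show "((\<lambda>t. t powr \<nu> * f t) \<longlongrightarrow> 0) at_top \<and> (\<exists>M. improper_RS_integral_0_inf (\<lambda>t. t powr \<nu>) f M)"
        using impR' unfolding H_def by blast
    next
      assume "((\<lambda>t. t powr \<nu> * f t) \<longlongrightarrow> 0) at_top \<and> (\<exists>M. improper_RS_integral_0_inf (\<lambda>t. t powr \<nu>) f M)"
      then obtain M where "(H \<longlongrightarrow> 0) at_top" "(R \<longlongrightarrow> M) F" using impR' unfolding H_def by blast
      from bwd[OF this] show "\<exists>L. improper_integral_0_inf (\<lambda>t. t powr (\<nu> - 1) * f t) L" using impI' by blast
    qed
    fix L M assume "improper_integral_0_inf (\<lambda>t. t powr (\<nu> - 1) * f t) L"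
      "improper_RS_integral_0_inf (\<lambda>t. t powr \<nu>) f M"
    then have JL: "(J \<longlongrightarrow> L) F" and RM: "(R \<longlongrightarrow> M) F" using impI' impR' by auto
    have "(R \<longlongrightarrow> - \<nu> * L) F" using fwd[OF JL] by blast
    then have "M = - \<nu> * L" using tendsto_unique[OF Fnb RM] by blast
    then show "L = - M / \<nu>" using nu by (simp add: field_simps)
  qed
qed


end
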